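(* Let $a>b>0$ and let $E$ be the ellipse $\frac{x^2}{a^2}+\frac{y^2}{b^2}=1$. For a 3-periodic billiard orbit $T$ in $E$, consider the Cosine Circle of the excentral triangle of $T$. Then this circle is the same for all 3-periodic orbits in $E$: its radius $r^*$ is constant, it is centered at the center $(0,0)$ of $E$, and it lies exterior to $E$ (i.e. $r^*>a$).
   Context: A 3-periodic billiard orbit in the ellipse $E$ is a nondegenerate triangle $P_1P_2P_3$ with all vertices on $E$ such that at each vertex $P_i$ the normal line to $E$ at $P_i$ bisects the interior angle of the triangle at $P_i$. The excentral triangle of $T$ has vertices at the three excenters of $T$. The Cosine Circle (second Lemoine circle) of a triangle $\Delta$ is the circle centered at the symmedian point $X_6$ of $\Delta$ passing through the six points where the three lines through $X_6$ parallel to the sides of the orthic triangle of $\Delta$ (the triangle of altitude feet) meet the sides of $\Delta$. *)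

theory Defs
  imports "HOL-Analysis.Analysis"
begin

type_synonym pt = "real \<times> real"

definition cross2 :: "pt \<Rightarrow> pt \<Rightarrow> real" where
  "cross2 u v = fst u * snd v - snd u * fst v"

definition on_ellipse :: "real \<Rightarrow> real \<Rightarrow> pt \<Rightarrow> bool" where
  "on_ellipse a b P \<longleftrightarrow> (fst P)^2 / a^2 + (snd P)^2 / b^2 = 1"

definition ellipse_normal :: "real \<Rightarrow> real \<Rightarrow> pt \<Rightarrow> pt" where
  "ellipse_normal a b P = (fst P / a^2, snd P / b^2)"

definition int_bisector_dir :: "pt \<Rightarrow> pt \<Rightarrow> pt \<Rightarrow> pt" where
  "int_bisector_dir P Q R = (Q - P) /\<^sub>R norm (Q - P) + (R - P) /\<^sub>R norm (R - P)"

definition normal_bisects :: "real \<Rightarrow> real \<Rightarrow> pt \<Rightarrow> pt \<Rightarrow> pt \<Rightarrow> bool" where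
  "normal_bisects a b P Q R \<longleftrightarrow> cross2 (int_bisector_dir P Q R) (ellipse_normal a b P) = 0"

definition billiard3 :: "real \<Rightarrow> real \<Rightarrow> pt \<Rightarrow> pt \<Rightarrow> pt \<Rightarrow> bool" where
  "billiard3 a b P1 P2 P3 \<longleftrightarrow>
     \<not> collinear {P1, P2, P3} \<and>
     on_ellipse a b P1 \<and> on_ellipse a b P2 \<and> on_ellipse a b P3 \<and>
     normal_bisects a b P1 P2 P3 \<and> normal_bisects a b P2 P3 P1 \<and> normal_bisects a b P3 P1 P2"

text \<open>Excenter opposite vertex A of triangle ABC: barycentrics (-a : b : c).\<close>
definition excenter :: "pt \<Rightarrow> pt \<Rightarrow> pt \<Rightarrow> pt" where
  "excenter A B C =
     (let la = dist B C; lb = dist C A; lc = dist A B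
      in (1 / (- la + lb + lc)) *\<^sub>R ((- la) *\<^sub>R A + lb *\<^sub>R B + lc *\<^sub>R C))"

definition excentral :: "pt \<Rightarrow> pt \<Rightarrow> pt \<Rightarrow> pt \<times> pt \<times> pt" where
  "excentral A B C = (excenter A B C, excenter B C A, excenter C A B)"

definition symmedian :: "pt \<Rightarrow> pt \<Rightarrow> pt \<Rightarrow> pt" where
  "symmedian A B C =
     (let la = dist B C; lb = dist C A; lc = dist A B
      in (1 / (la^2 + lb^2 + lc^2)) *\<^sub>R (la^2 *\<^sub>R A + lb^2 *\<^sub>R B + lc^2 *\<^sub>R C))"

definition foot :: "pt \<Rightarrow> pt \<Rightarrow> pt \<Rightarrow> pt" where
  "foot P U V = U + (((P - U) \<bullet> (V - U)) / ((V - U) \<bullet> (V - U))) *\<^sub>R (V - U)"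

definition orthic :: "pt \<Rightarrow> pt \<Rightarrow> pt \<Rightarrow> pt \<times> pt \<times> pt" where
  "orthic A B C = (foot A B C, foot B C A, foot C A B)"

definition cosine_circle_points :: "pt \<Rightarrow> pt \<Rightarrow> pt \<Rightarrow> pt set" where
  "cosine_circle_points A B C =
     (let K = symmedian A B C;
          (Ha, Hb, Hc) = orthic A B C;
          dirs = {Hc - Hb, Ha - Hc, Hb - Ha};
          sides = closed_segment A B \<union> closed_segment B C \<union> closed_segment C A
      in {X \<in> sides. \<exists>d\<in>dirs. \<exists>t::real. X = K + t *\<^sub>R d})"

end

theory Submission
  imports Defs "HOL-Analysis.Analysis"
begin


definition edot :: "real \<Rightarrow> real \<Rightarrow> pt \<Rightarrow> pt \<Rightarrow> real" where
  "edot a b P Q = fst P * fst Q / a^2 + snd P * snd Q / b^2"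

lemma normal_inner: "ellipse_normal a b P \<bullet> Q = edot a b P Q"
  by (simp add: ellipse_normal_def edot_def inner_prod_def)

lemma cross2_pairs: "cross2 (x1, y1) (x2, y2) = x1 * y2 - y1 * x2"
  by (simp add: cross2_def)

lemma inner_pairs: "(x1, y1) \<bullet> (x2, y2) = x1 * x2 + y1 * y2"
  by simp

lemma dist_pairs: "dist (x1, y1) (x2, y2) = sqrt ((x1 - x2)^2 + (y1 - y2)^2)"
  by (simp add: dist_Pair_Pair dist_real_def)

lemma noncol_cross:
  assumes "\<not> collinear {P1, P2, P3}"
  shows "cross2 (P2 - P1) (P3 - P1) \<noteq> 0"
proof
  assume h: "cross2 (P2 - P1) (P3 - P1) = 0"
  obtain x1 y1 x2 y2 x3 y3 where P: "P1 = (x1, y1)" "P2 = (x2, y2)" "P3 = (x3, y3)"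
    by (metis prod.collapse)
  have h': "(x1 - x2) * (y3 - y2) - (y1 - y2) * (x3 - x2) = 0"
    using h by (simp add: P cross2_def) algebra
  have "collinear {0, P1 - P2, P3 - P2}"
  proof (cases "P1 - P2 = 0")
    case True thus ?thesis by (simp add: collinear_lemma)
  next
    case False
    hence nz: "(x1 - x2)^2 + (y1 - y2)^2 \<noteq> 0" using P
      by (auto simp: prod_eq_iff)
    define c where "c = ((x1 - x2) * (x3 - x2) + (y1 - y2) * (y3 - y2)) / ((x1 - x2)^2 + (y1 - y2)^2)"
    have q1: "(x3 - x2) * ((x1 - x2)^2 + (y1 - y2)^2) = ((x1 - x2) * (x3 - x2) + (y1 - y2) * (y3 - y2)) * (x1 - x2)"
      using h' by algebra
    have q2: "(y3 - y2) * ((x1 - x2)^2 + (y1 - y2)^2) = ((x1 - x2) * (x3 - x2) + (y1 - y2) * (y3 - y2)) * (y1 - y2)"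
      using h' by algebra
    have e1: "x3 - x2 = c * (x1 - x2)"
      using q1 nz unfolding c_def by (simp add: eq_divide_eq divide_simps)
    have e2: "y3 - y2 = c * (y1 - y2)"
      using q2 nz unfolding c_def by (simp add: eq_divide_eq divide_simps)
    have "P3 - P2 = c *\<^sub>R (P1 - P2)" using e1 e2 by (simp add: P prod_eq_iff)
    thus ?thesis by (auto simp: collinear_lemma)
  qed
  hence "collinear {P1, P2, P3}"
    using collinear_3[of P1 P2 P3] by simp
  with assms show False by simp
qed

lemma perp_transfer:
  fixes w1 w2 n1 n2 v1 v2 :: real
  assumes "w1 * n2 - w2 * n1 = 0" "w1 * v1 + w2 * v2 = 0" "w1 \<noteq> 0 \<or> w2 \<noteq> 0"
  shows "n1 * v1 + n2 * v2 = 0"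
proof (cases "w1 = 0")
  case True
  hence "w2 \<noteq> 0" using assms by simp
  have "w2 * (n1 * v1 + n2 * v2) = 0" using assms(1,2) True by algebra
  thus ?thesis using \<open>w2 \<noteq> 0\<close> by simp
next
  case False
  have "w1 * (n1 * v1 + n2 * v2) = 0" using assms(1,2) by algebra
  thus ?thesis using False by simp
qed

lemma vertex:
  assumes nb: "normal_bisects a b P Q R" and S: "cross2 (Q - P) (R - P) \<noteq> 0"
  shows "cross2 (dist P R *\<^sub>R (Q - P) + dist P Q *\<^sub>R (R - P)) (ellipse_normal a b P) = 0"
    and "ellipse_normal a b P \<bullet> (dist P R *\<^sub>R (Q - P) - dist P Q *\<^sub>R (R - P)) = 0"
proof -
  obtain px py qx qy rx ry where P: "P = (px, py)" "Q = (qx, qy)" "R = (rx, ry)"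
    by (metis prod.collapse)
  define lQ where "lQ = dist P Q"
  define lR where "lR = dist P R"
  define n1 where "n1 = px / a^2"
  define n2 where "n2 = py / b^2"
  have S': "(qx - px) * (ry - py) - (qy - py) * (rx - px) \<noteq> 0" using S by (simp add: P cross2_def)
  have lQ2: "lQ^2 = (qx - px)^2 + (qy - py)^2"
    unfolding lQ_def P dist_pairs by (simp add: power2_commute)
  have lR2: "lR^2 = (rx - px)^2 + (ry - py)^2"
    unfolding lR_def P dist_pairs by (simp add: power2_commute)
  have "Q \<noteq> P" using S by (auto simp: cross2_def)
  hence lQp: "lQ > 0" unfolding lQ_def by simp
  have "R \<noteq> P" using S by (auto simp: cross2_def)
  hence lRp: "lR > 0" unfolding lR_def by simp
  have nQ: "norm (Q - P) = lQ" unfolding lQ_def by (simp add: dist_norm norm_minus_commute)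
  have nR: "norm (R - P) = lR" unfolding lR_def by (simp add: dist_norm norm_minus_commute)
  have nb': "((qx - px) / lQ + (rx - px) / lR) * n2 - ((qy - py) / lQ + (ry - py) / lR) * n1 = 0"
    using nb unfolding normal_bisects_def int_bisector_dir_def nQ nR
    by (simp add: P cross2_def ellipse_normal_def n1_def n2_def divide_inverse mult.commute)
  have c1: "(lR * (qx - px) + lQ * (rx - px)) * n2 - (lR * (qy - py) + lQ * (ry - py)) * n1 = 0"
  proof -
    have "lQ * lR * (((qx - px) / lQ + (rx - px) / lR) * n2 - ((qy - py) / lQ + (ry - py) / lR) * n1)
      = (lR * (qx - px) + lQ * (rx - px)) * n2 - (lR * (qy - py) + lQ * (ry - py)) * n1"
      using lQp lRp by (simp add: field_simps)
    thus ?thesis using nb' by simp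
  qed
  show "cross2 (dist P R *\<^sub>R (Q - P) + dist P Q *\<^sub>R (R - P)) (ellipse_normal a b P) = 0"
    using c1 unfolding lQ_def[symmetric] lR_def[symmetric]
    by (simp add: P cross2_def ellipse_normal_def n1_def n2_def)
  have wv: "(lR * (qx - px) + lQ * (rx - px)) * (lR * (qx - px) - lQ * (rx - px))
      + (lR * (qy - py) + lQ * (ry - py)) * (lR * (qy - py) - lQ * (ry - py)) = 0"
  proof -
    have "(lR * (qx - px) + lQ * (rx - px)) * (lR * (qx - px) - lQ * (rx - px))
      + (lR * (qy - py) + lQ * (ry - py)) * (lR * (qy - py) - lQ * (ry - py))
      = lR^2 * ((qx - px)^2 + (qy - py)^2) - lQ^2 * ((rx - px)^2 + (ry - py)^2)"
      by (simp add: algebra_simps power2_eq_square)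
    also have "\<dots> = 0" unfolding lQ2[symmetric] lR2[symmetric] by simp
    finally show ?thesis .
  qed
  have wnz: "lR * (qx - px) + lQ * (rx - px) \<noteq> 0 \<or> lR * (qy - py) + lQ * (ry - py) \<noteq> 0"
  proof (rule ccontr)
    assume "\<not> ?thesis"
    hence z: "lR * (qx - px) + lQ * (rx - px) = 0" "lR * (qy - py) + lQ * (ry - py) = 0" by auto
    have "lQ * ((qx - px) * (ry - py) - (qy - py) * (rx - px)) = 0"
      using z by algebra
    thus False using lQp S' by simp
  qed
  have "n1 * (lR * (qx - px) - lQ * (rx - px)) + n2 * (lR * (qy - py) - lQ * (ry - py)) = 0"
    using perp_transfer[OF c1 wv wnz] by (simp add: algebra_simps)
  moreover have "ellipse_normal a b P \<bullet> (lR *\<^sub>R (Q - P) - lQ *\<^sub>R (R - P)) = 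
     n1 * (lR * (qx - px) - lQ * (rx - px)) + n2 * (lR * (qy - py) - lQ * (ry - py))"
    unfolding P ellipse_normal_def n1_def n2_def by simp
  ultimately show "ellipse_normal a b P \<bullet> (dist P R *\<^sub>R (Q - P) - dist P Q *\<^sub>R (R - P)) = 0"
    unfolding lQ_def[symmetric] lR_def[symmetric] by linarith
qed


lemma strict_tri:
  assumes S: "cross2 (B - A) (C - A) \<noteq> 0"
  shows "dist B C < dist C A + dist A B"
proof -
  obtain ax ay bx yb cx cy where P: "A = (ax, ay)" "B = (bx, yb)" "C = (cx, cy)"
    by (metis prod.collapse)
  define s where "s = dist A B"
  define t where "t = dist C A"
  define d where "d = dist B C"
  have s2: "s^2 = (bx - ax)^2 + (yb - ay)^2" unfolding s_def P dist_pairs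
    by (simp add: power2_commute)
  have t2: "t^2 = (cx - ax)^2 + (cy - ay)^2" unfolding t_def P dist_pairs by simp
  have d2: "d^2 = (bx - cx)^2 + (yb - cy)^2" unfolding d_def P dist_pairs by simp
  have s0: "s \<ge> 0" "t \<ge> 0" "d \<ge> 0" unfolding s_def t_def d_def by simp_all
  define ip where "ip = (bx - ax) * (cx - ax) + (yb - ay) * (cy - ay)"
  define cr where "cr = (bx - ax) * (cy - ay) - (yb - ay) * (cx - ax)"
  have cr0: "cr \<noteq> 0" using S by (simp add: P cross2_def cr_def)
  have lag: "(s * t)^2 = ip^2 + cr^2"
    unfolding power_mult_distrib s2 t2 ip_def cr_def by algebra
  have "ip^2 < (s * t)^2" unfolding lag using cr0 by simp
  hence "\<bar>ip\<bar>^2 < (s * t)^2" by simp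
  moreover have st0: "s * t \<ge> 0" using s0 by simp
  ultimately have ab: "\<bar>ip\<bar> < s * t" by (rule power_less_imp_less_base)
  have dd: "d^2 = s^2 + t^2 - 2 * ip" unfolding d2 s2 t2 ip_def by (simp add: power2_eq_square algebra_simps)
  have ts: "(t + s)^2 = t^2 + s^2 + 2 * (s * t)" by (simp add: power2_eq_square algebra_simps)
  have "d^2 < (t + s)^2" using dd ts ab by linarith
  moreover have "t + s \<ge> 0" using s0 by simp
  ultimately have "d < t + s" by (rule power_less_imp_less_base)
  thus ?thesis unfolding d_def t_def s_def .
qed

lemma cross2_scaleR_left: "cross2 (c *\<^sub>R x) y = c * cross2 x y"
  by (simp add: cross2_def algebra_simps)

lemma exc_shift:
  assumes "- dist B C + dist C A + dist A B \<noteq> 0"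
  shows "(- dist B C + dist C A + dist A B) *\<^sub>R (excenter A B C - A)
     = dist C A *\<^sub>R (B - A) + dist A B *\<^sub>R (C - A)"
proof -
  define D where "D = - dist B C + dist C A + dist A B"
  have "excenter A B C = (1 / D) *\<^sub>R ((- dist B C) *\<^sub>R A + dist C A *\<^sub>R B + dist A B *\<^sub>R C)"
    unfolding excenter_def Let_def D_def by simp
  hence "D *\<^sub>R (excenter A B C - A) = ((- dist B C) *\<^sub>R A + dist C A *\<^sub>R B + dist A B *\<^sub>R C) - D *\<^sub>R A"
    using assms unfolding D_def[symmetric] by (simp add: scaleR_diff_right)
  also have "\<dots> = dist C A *\<^sub>R (B - A) + dist A B *\<^sub>R (C - A)"
    unfolding D_def by (simp add: algebra_simps)
  finally show ?thesis unfolding D_def .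
qed

lemma scaleR_solve:
  fixes x v :: "'a::real_vector"
  assumes "d \<noteq> 0" "d *\<^sub>R x = v"
  shows "x = (1 / d) *\<^sub>R v"
  using assms by (auto simp: field_simps)

lemma vertex_facts:
  assumes nb: "normal_bisects a b P Q R" and onP: "on_ellipse a b P"
    and S: "cross2 (Q - P) (R - P) \<noteq> 0"
    and D1: "- dist Q R + dist R P + dist P Q \<noteq> 0"
    and D2: "dist Q R - dist R P + dist P Q \<noteq> 0"
    and D3: "dist Q R + dist R P - dist P Q \<noteq> 0"
  shows "edot a b P (excenter R P Q) = 1"
    and "edot a b P (excenter Q R P) = 1"
    and "dist P R * (1 - edot a b P Q) = dist P Q * (1 - edot a b P R)"
    and "cross2 (excenter P Q R - P) (ellipse_normal a b P) = 0"
proof -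
  note v = vertex[OF nb S]
  define n where "n = ellipse_normal a b P"
  define V where "V = dist P R *\<^sub>R (Q - P) - dist P Q *\<^sub>R (R - P)"
  have nV: "n \<bullet> V = 0" using v(2) unfolding n_def V_def .
  have nP: "n \<bullet> P = 1" using onP unfolding n_def normal_inner edot_def on_ellipse_def
    by (simp add: power2_eq_square)
  have dPR: "dist R P = dist P R" by (simp add: dist_commute)
  have dQR: "dist R Q = dist Q R" by (simp add: dist_commute)
  have dPQ: "dist Q P = dist P Q" by (simp add: dist_commute)
  have D3': "- dist P Q + dist Q R + dist R P \<noteq> 0" using D3 by simp
  have "(- dist P Q + dist Q R + dist R P) *\<^sub>R (excenter R P Q - P)
     = (- dist P Q + dist Q R + dist R P) *\<^sub>R (excenter R P Q - R) - (- dist P Q + dist Q R + dist R P) *\<^sub>R (P - R)"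
    by (simp add: algebra_simps)
  also have "\<dots> = V" unfolding exc_shift[OF D3'] unfolding V_def dPR dQR dPQ by (simp add: algebra_simps)
  finally have I3: "excenter R P Q - P = (1 / (- dist P Q + dist Q R + dist R P)) *\<^sub>R V"
    by (rule scaleR_solve[OF D3'])
  have D2': "- dist R P + dist P Q + dist Q R \<noteq> 0" using D2 by simp
  have "(- dist R P + dist P Q + dist Q R) *\<^sub>R (excenter Q R P - P)
     = (- dist R P + dist P Q + dist Q R) *\<^sub>R (excenter Q R P - Q) - (- dist R P + dist P Q + dist Q R) *\<^sub>R (P - Q)"
    by (simp add: algebra_simps)
  also have "\<dots> = - V" unfolding exc_shift[OF D2'] unfolding V_def dPR dQR dPQ by (simp add: algebra_simps)
  finally have I2: "excenter Q R P - P = (1 / (- dist R P + dist P Q + dist Q R)) *\<^sub>R (- V)"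
    by (rule scaleR_solve[OF D2'])
  have "n \<bullet> excenter R P Q = n \<bullet> P + n \<bullet> (excenter R P Q - P)" by (simp add: inner_diff_right)
  also have "\<dots> = 1" unfolding I3 using nP nV by simp
  finally show "edot a b P (excenter R P Q) = 1" unfolding n_def normal_inner .
  have "n \<bullet> excenter Q R P = n \<bullet> P + n \<bullet> (excenter Q R P - P)" by (simp add: inner_diff_right)
  also have "\<dots> = 1" unfolding I2 using nP nV by simp
  finally show "edot a b P (excenter Q R P) = 1" unfolding n_def normal_inner .
  have "n \<bullet> V = dist P R * (n \<bullet> Q - n \<bullet> P) - dist P Q * (n \<bullet> R - n \<bullet> P)"
    unfolding V_def by (simp add: inner_diff_right)
  hence h: "dist P R * (edot a b P Q - 1) = dist P Q * (edot a b P R - 1)"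
    using nV nP unfolding n_def normal_inner by simp
  have "dist P R * (1 - edot a b P Q) = - (dist P R * (edot a b P Q - 1))"
    "dist P Q * (1 - edot a b P R) = - (dist P Q * (edot a b P R - 1))"
    by (simp_all add: algebra_simps)
  thus "dist P R * (1 - edot a b P Q) = dist P Q * (1 - edot a b P R)" using h by linarith
  have I1: "excenter P Q R - P = (1 / (- dist Q R + dist R P + dist P Q)) *\<^sub>R
      (dist P R *\<^sub>R (Q - P) + dist P Q *\<^sub>R (R - P))"
    using scaleR_solve[OF D1 exc_shift[OF D1]] unfolding dPR .
  show "cross2 (excenter P Q R - P) (ellipse_normal a b P) = 0"
    unfolding I1 cross2_scaleR_left v(1) by simp
qed




lemma SL1:
  fixes u1 w1 u2 w2 e1 e2 :: real
  assumes "u1^2 + w1^2 = 1" "u1 * e1 + w1 * e2 = 1" "u2 * e1 + w2 * e2 = 1"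
  shows "(u1 * e2 - w1 * e1) * (u1 * w2 - w1 * u2) = 1 - (u1 * u2 + w1 * w2)"
  using assms by algebra

lemma SL_aux_c:
  fixes K c X p :: real
  assumes K: "K > 0" and c: "c > 0" and h1: "X^2 + K * c^2 = 2 * K * c" and h2: "p * X = K * c"
  shows "c * (K + p^2) = 2 * p^2" "X * (K + p^2) = 2 * K * p" "p \<noteq> 0"
proof -
  have "p^2 * (X^2 + K * c^2) = p^2 * (2 * K * c)" using h1 by simp
  hence "(p * X)^2 + K * p^2 * c^2 = 2 * K * p^2 * c" by (simp add: algebra_simps power_mult_distrib)
  hence "(K * c)^2 + K * p^2 * c^2 = 2 * K * p^2 * c" using h2 by simp
  hence "(K * c) * (c * (K + p^2)) = (K * c) * (2 * p^2)" by (simp add: algebra_simps power2_eq_square)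
  moreover have "K * c \<noteq> 0" using K c by simp
  ultimately show e: "c * (K + p^2) = 2 * p^2" by simp
  show p0: "p \<noteq> 0" using h2 K c by auto
  have "p * (X * (K + p^2)) = K * (c * (K + p^2))" using h2 by (simp add: algebra_simps)
  also have "\<dots> = p * (2 * K * p)" using e by (simp add: algebra_simps power2_eq_square)
  finally show "X * (K + p^2) = 2 * K * p" using p0 by simp
qed

lemma SL2:
  fixes K c12 c13 X12 X13 p q t lam u :: real
  assumes K: "K > 0" and c12: "c12 > 0" and c13: "c13 > 0"
    and h12: "X12^2 + K * c12^2 = 2 * K * c12" and h13: "X13^2 + K * c13^2 = 2 * K * c13"
    and hp: "p * X12 = K * c12" and hq: "q * X13 = K * c13"
    and ht: "t * (c12 - c13) = 1" and hl: "lam = t * (X13 - X12)"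
    and hu: "lam = (1 - u) * q + u * p" and u0: "0 \<le> u" and u1: "u \<le> 1"
  shows False
proof -
  note a = SL_aux_c[OF K c12 h12 hp]
  note b = SL_aux_c[OF K c13 h13 hq]
  have pos: "K + p^2 > 0" "K + q^2 > 0" using K by (simp_all add: add_pos_nonneg)
  have lc: "lam * (c12 - c13) = X13 - X12" using ht hl by algebra
  have "lam * (c12 - c13) * ((K + p^2) * (K + q^2)) = (X13 - X12) * ((K + p^2) * (K + q^2))"
    using lc by simp
  hence "lam * (2 * p^2 * (K + q^2) - 2 * q^2 * (K + p^2)) = 2 * K * q * (K + p^2) - 2 * K * p * (K + q^2)"
    using a(1,2) b(1,2) by algebra
  hence "2 * K * ((p - q) * (lam * (p + q) + (K - p * q))) = 0" by algebra
  hence pq: "(p - q) * (lam * (p + q) + (K - p * q)) = 0" using K by simp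
  have "p \<noteq> q"
  proof
    assume "p = q"
    hence "c12 * (K + p^2) = c13 * (K + p^2)" using a(1) b(1) by simp
    hence "c12 = c13" using pos by simp
    thus False using ht by simp
  qed
  hence e: "lam * (p + q) = p * q - K" using pq by simp
  have "lam * (p + q) = p * q + (1 - u) * q^2 + u * p^2" unfolding hu by (simp add: algebra_simps power2_eq_square)
  moreover have "(1 - u) * q^2 \<ge> 0" "u * p^2 \<ge> 0" using u0 u1 by simp_all
  ultimately show False using e K by linarith
qed

lemma betw:
  fixes x p q :: real
  assumes "(q \<le> x \<and> x \<le> p) \<or> (p \<le> x \<and> x \<le> q)" "p \<noteq> q"
  shows "0 \<le> (x - q) / (p - q) \<and> (x - q) / (p - q) \<le> 1"
proof (cases "q < p")
  case True
  hence "q \<le> x \<and> x \<le> p" using assms by auto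
  thus ?thesis using True by (simp add: divide_simps)
next
  case False
  hence "p < q" using assms(2) by simp
  hence "p \<le> x \<and> x \<le> q" using assms by auto
  thus ?thesis using \<open>p < q\<close> by (simp add: divide_simps)
qed

lemma SL3:
  fixes K c12 c13 X12 X13 p q N1 :: real
  assumes K: "K > 0" and c12: "c12 > 0" and c13: "c13 > 0"
    and hp: "p * X12 = K * c12" and hq: "q * X13 = K * c13"
    and neg: "X12 * X13 < 0" and id: "K * (c12 * c13) + X12 * X13 = K * N1" and N1: "N1 > 0"
  shows "p \<noteq> q" "0 \<le> (- X12 / c12 - q) / (p - q)" "(- X12 / c12 - q) / (p - q) \<le> 1"
proof -
  have "p * q * (X12 * X13) = K * c12 * (K * c13)" using hp hq by (metis mult.assoc mult.left_commute)
  hence "(p * q + K) * (X12 * X13) = K * (K * N1)" using id by algebra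
  moreover have "K * (K * N1) > 0" using K N1 by simp
  ultimately have "(p * q + K) * (X12 * X13) > 0" by simp
  hence pqK: "p * q + K < 0"
  proof -
    assume h: "(p * q + K) * (X12 * X13) > 0"
    show ?thesis
    proof (rule ccontr)
      assume "\<not> p * q + K < 0"
      hence "(p * q + K) * (X12 * X13) \<le> 0" using mult_nonneg_nonpos[of "p * q + K" "X12 * X13"] neg by linarith
      thus False using h by simp
    qed
  qed
  have p0: "p \<noteq> 0" using hp K c12 by auto
  have l0: "- X12 / c12 = - K / p"
    using hp p0 c12 by (simp add: field_simps)
  show pq: "p \<noteq> q"
  proof
    assume "p = q"
    hence "p * q \<ge> 0" by simp
    thus False using pqK K by linarith
  qed
  show "0 \<le> (- X12 / c12 - q) / (p - q)" "(- X12 / c12 - q) / (p - q) \<le> 1"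
  proof -
    consider "p > 0" | "p < 0" using p0 by linarith
    then have "(q \<le> - K / p \<and> - K / p \<le> p) \<or> (p \<le> - K / p \<and> - K / p \<le> q)"
    proof cases
      case 1
      have "q * p < - K" using pqK by (simp add: algebra_simps)
      hence "q < - K / p" using 1 by (simp add: field_simps)
      moreover have "- K / p \<le> p" using 1 K by (smt (verit) divide_neg_pos)
      ultimately show ?thesis by simp
    next
      case 2
      have "q * p < - K" using pqK by (simp add: algebra_simps)
      hence "q > - K / p" using 2 by (simp add: field_simps)
      moreover have "K / p < 0" using 2 K by (simp add: divide_pos_neg)
      hence "p \<le> - K / p" using 2 by linarith
      ultimately show ?thesis by simp
    qed
    thus "0 \<le> (- X12 / c12 - q) / (p - q)" "(- X12 / c12 - q) / (p - q) \<le> 1"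
      unfolding l0 using betw[OF _ pq] by blast+
  qed
qed

lemma par2:
  fixes d1 d2 y1 y2 z1 z2 :: real
  assumes "d1 \<noteq> 0 \<or> d2 \<noteq> 0" "d1 * y1 + d2 * y2 = 0" "d1 * z1 + d2 * z2 = 0"
  shows "y1 * z2 - y2 * z1 = 0"
proof (cases "d1 = 0")
  case True
  hence "d2 \<noteq> 0" using assms(1) by simp
  have "d2 * (y1 * z2 - y2 * z1) = 0" using assms(2,3) True by algebra
  thus ?thesis using \<open>d2 \<noteq> 0\<close> by simp
next
  case False
  have "d1 * (y1 * z2 - y2 * z1) = 0" using assms(2,3) by algebra
  thus ?thesis using False by simp
qed



lemma perp_rep:
  fixes n v :: pt
  assumes "n \<noteq> 0" "n \<bullet> v = 0"
  shows "v = (cross2 n v / (n \<bullet> n)) *\<^sub>R (- snd n, fst n)"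
proof -
  obtain n1 n2 v1 v2 where nv: "n = (n1, n2)" "v = (v1, v2)" by (metis prod.collapse)
  have "n \<bullet> n \<noteq> 0" using assms(1) by simp
  hence nz: "n1 * n1 + n2 * n2 \<noteq> 0" using nv by simp
  have o: "n1 * v1 + n2 * v2 = 0" using assms(2) nv by simp
  have "v1 * (n1 * n1 + n2 * n2) = (n1 * v2 - n2 * v1) * (- n2)" using o by algebra
  hence e1: "v1 = (n1 * v2 - n2 * v1) / (n1 * n1 + n2 * n2) * (- n2)" using nz by (simp add: field_simps)
  have "v2 * (n1 * n1 + n2 * n2) = (n1 * v2 - n2 * v1) * n1" using o by algebra
  hence e2: "v2 = (n1 * v2 - n2 * v1) / (n1 * n1 + n2 * n2) * n1" using nz by (simp add: field_simps)
  show ?thesis using e1 e2 by (simp add: nv cross2_def prod_eq_iff)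
qed

lemma par_rep:
  fixes n v :: pt
  assumes "n \<noteq> 0" "cross2 v n = 0"
  shows "v = ((v \<bullet> n) / (n \<bullet> n)) *\<^sub>R n"
proof -
  obtain n1 n2 v1 v2 where nv: "n = (n1, n2)" "v = (v1, v2)" by (metis prod.collapse)
  have "n \<bullet> n \<noteq> 0" using assms(1) by simp
  hence nz: "n1 * n1 + n2 * n2 \<noteq> 0" using nv by simp
  have o: "v1 * n2 - v2 * n1 = 0" using assms(2) nv by (simp add: cross2_def)
  have "v1 * (n1 * n1 + n2 * n2) = (v1 * n1 + v2 * n2) * n1" using o by algebra
  hence e1: "v1 = (v1 * n1 + v2 * n2) / (n1 * n1 + n2 * n2) * n1" using nz by (simp add: field_simps)
  have "v2 * (n1 * n1 + n2 * n2) = (v1 * n1 + v2 * n2) * n2" using o by algebra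
  hence e2: "v2 = (v1 * n1 + v2 * n2) / (n1 * n1 + n2 * n2) * n2" using nz by (simp add: field_simps)
  show ?thesis using e1 e2 by (simp add: nv prod_eq_iff)
qed

lemma foot_eq:
  fixes n P U V Y :: pt
  assumes n0: "n \<noteq> 0" and hU: "n \<bullet> (U - P) = 0" and hV: "n \<bullet> (V - P) = 0"
    and hY: "cross2 (Y - P) n = 0" and UV: "U \<noteq> V"
  shows "foot Y U V = P"
proof -
  define m where "m = (- snd n, fst n)"
  define \<alpha> where "\<alpha> = cross2 n (U - P) / (n \<bullet> n)"
  define \<beta> where "\<beta> = cross2 n (V - P) / (n \<bullet> n)"
  define \<gamma> where "\<gamma> = ((Y - P) \<bullet> n) / (n \<bullet> n)"
  have U: "U = P + \<alpha> *\<^sub>R m" using perp_rep[OF n0 hU] unfolding \<alpha>_def m_def by (simp add: algebra_simps)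
  have V: "V = P + \<beta> *\<^sub>R m" using perp_rep[OF n0 hV] unfolding \<beta>_def m_def by (simp add: algebra_simps)
  have Y: "Y = P + \<gamma> *\<^sub>R n" using par_rep[OF n0 hY] unfolding \<gamma>_def by (simp add: algebra_simps)
  have nm: "n \<bullet> m = 0" "m \<bullet> n = 0" unfolding m_def by (simp_all add: inner_prod_def algebra_simps)
  have mm: "m \<bullet> m = n \<bullet> n" unfolding m_def by (simp add: inner_prod_def algebra_simps)
  have nn: "n \<bullet> n > 0" using n0 by simp
  have ab: "\<beta> - \<alpha> \<noteq> 0" using UV U V by auto
  have VU: "V - U = (\<beta> - \<alpha>) *\<^sub>R m" using U V by (simp add: algebra_simps)
  have YU: "Y - U = \<gamma> *\<^sub>R n - \<alpha> *\<^sub>R m" using U Y by (simp add: algebra_simps)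
  have i1: "(Y - U) \<bullet> (V - U) = - (\<beta> - \<alpha>) * \<alpha> * (n \<bullet> n)"
    unfolding VU YU by (simp add: inner_diff_left nm mm algebra_simps)
  have i2: "(V - U) \<bullet> (V - U) = (\<beta> - \<alpha>) * (\<beta> - \<alpha>) * (n \<bullet> n)"
    unfolding VU by (simp add: mm algebra_simps)
  have "((Y - U) \<bullet> (V - U)) / ((V - U) \<bullet> (V - U)) = ((\<beta> - \<alpha>) * (- \<alpha> * (n \<bullet> n))) / ((\<beta> - \<alpha>) * ((\<beta> - \<alpha>) * (n \<bullet> n)))"
    unfolding i1 i2 by (simp add: algebra_simps)
  also have "\<dots> = - \<alpha> / (\<beta> - \<alpha>)" using ab nn by simp
  finally have "((Y - U) \<bullet> (V - U)) / ((V - U) \<bullet> (V - U)) * (\<beta> - \<alpha>) = - \<alpha>"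
    using ab by simp
  hence "foot Y U V = U + (- \<alpha>) *\<^sub>R m"
    unfolding foot_def VU by (simp add: scaleR_scaleR)
  thus ?thesis using U by simp
qed

lemma pole_mid:
  assumes a0: "a \<noteq> 0" and b0: "b \<noteq> 0" and onP: "on_ellipse a b P" and onQ: "on_ellipse a b Q"
    and PQ: "P \<noteq> Q" and hP: "edot a b P Y = 1" and hQ: "edot a b Q Y = 1"
  shows "cross2 (P + Q) Y = 0"
proof -
  obtain px py qx qy yx yy where c: "P = (px, py)" "Q = (qx, qy)" "Y = (yx, yy)" by (metis prod.collapse)
  have d0: "(px - qx) / a^2 \<noteq> 0 \<or> (py - qy) / b^2 \<noteq> 0" using PQ a0 b0 c by auto
  have "(px - qx) / a^2 * yx + (py - qy) / b^2 * yy = (px * yx / a^2 + py * yy / b^2) - (qx * yx / a^2 + qy * yy / b^2)"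
    using a0 b0 by (simp add: field_simps)
  also have "\<dots> = 0" using hP hQ c unfolding edot_def by simp
  finally have e1: "(px - qx) / a^2 * yx + (py - qy) / b^2 * yy = 0" .
  have "(px - qx) / a^2 * (px + qx) + (py - qy) / b^2 * (py + qy) = (px^2 / a^2 + py^2 / b^2) - (qx^2 / a^2 + qy^2 / b^2)"
    using a0 b0 by (simp add: field_simps power2_eq_square)
  also have "\<dots> = 0" using onP onQ c unfolding on_ellipse_def by simp
  finally have e2: "(px - qx) / a^2 * (px + qx) + (py - qy) / b^2 * (py + qy) = 0" .
  have "(px + qx) * yy - (py + qy) * yx = 0" using par2[OF d0 e2 e1] .
  thus ?thesis using c by (simp add: cross2_def)
qed

lemma billiard3_rot: "billiard3 a b P1 P2 P3 \<Longrightarrow> billiard3 a b P2 P3 P1"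
  unfolding billiard3_def by (auto simp: insert_commute)

locale orbit =
  fixes a b :: real and P1 P2 P3 :: pt
  assumes b0: "0 < b" and ab: "b < a" and bil: "billiard3 a b P1 P2 P3"
begin

lemma rot: "orbit a b P2 P3 P1"
  using b0 ab billiard3_rot[OF bil] by unfold_locales auto

lemma a0: "0 < a" using b0 ab by simp

lemma on1: "on_ellipse a b P1" and on2: "on_ellipse a b P2" and on3: "on_ellipse a b P3"
  and nb1: "normal_bisects a b P1 P2 P3" and noncol: "\<not> collinear {P1, P2, P3}"
  using bil unfolding billiard3_def by auto

lemma S0: "cross2 (P2 - P1) (P3 - P1) \<noteq> 0" using noncol_cross[OF noncol] .

lemma S_rot: "cross2 (P3 - P2) (P1 - P2) = cross2 (P2 - P1) (P3 - P1)"
  by (simp add: cross2_def algebra_simps)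

lemma S0': "cross2 (P3 - P2) (P1 - P2) \<noteq> 0" "cross2 (P1 - P3) (P2 - P3) \<noteq> 0"
  using S0 by (simp_all add: cross2_def algebra_simps)

lemma tri1: "dist P2 P3 < dist P3 P1 + dist P1 P2"
  using strict_tri[OF S0] .

lemma tri2: "dist P3 P1 < dist P1 P2 + dist P2 P3"
  using strict_tri[OF S0'(1)] .

lemma tri3: "dist P1 P2 < dist P2 P3 + dist P3 P1"
  using strict_tri[OF S0'(2)] .

lemma distinct: "P1 \<noteq> P2" "P1 \<noteq> P3" "P2 \<noteq> P3"
  using S0 by (auto simp: cross2_def)

lemma v1:
  shows "edot a b P1 (excenter P3 P1 P2) = 1"
    and "edot a b P1 (excenter P2 P3 P1) = 1"
    and "dist P1 P3 * (1 - edot a b P1 P2) = dist P1 P2 * (1 - edot a b P1 P3)"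
    and "cross2 (excenter P1 P2 P3 - P1) (ellipse_normal a b P1) = 0"
proof -
  have D1: "- dist P2 P3 + dist P3 P1 + dist P1 P2 \<noteq> 0" using tri1 by simp
  have D2: "dist P2 P3 - dist P3 P1 + dist P1 P2 \<noteq> 0" using tri2 by (simp add: dist_commute)
  have D3: "dist P2 P3 + dist P3 P1 - dist P1 P2 \<noteq> 0" using tri3 by simp
  note vf = vertex_facts[OF nb1 on1 S0 D1 D2 D3]
  show "edot a b P1 (excenter P3 P1 P2) = 1"
    and "edot a b P1 (excenter P2 P3 P1) = 1"
    and "dist P1 P3 * (1 - edot a b P1 P2) = dist P1 P2 * (1 - edot a b P1 P3)"
    and "cross2 (excenter P1 P2 P3 - P1) (ellipse_normal a b P1) = 0"
    using vf by auto
qed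

end



lemma I6:
  fixes a b u1 w1 u2 w2 :: real
  assumes "u1^2 + w1^2 = 1" "u2^2 + w2^2 = 1"
  shows "a^2 * (u1 - u2)^2 + b^2 * (w1 - w2)^2
     = (1 - (u1 * u2 + w1 * w2)) * ((a^2 + b^2) - (a^2 - b^2) * (u1 * u2 - w1 * w2))"
  using assms by algebra

lemma c_pos:
  fixes u1 w1 u2 w2 :: real
  assumes "u1^2 + w1^2 = 1" "u2^2 + w2^2 = 1" "(u1, w1) \<noteq> (u2, w2)"
  shows "1 - (u1 * u2 + w1 * w2) > 0"
proof -
  have e: "1 - (u1 * u2 + w1 * w2) = ((u1 - u2)^2 + (w1 - w2)^2) / 2" using assms(1,2) by algebra
  have "(u1 - u2)^2 + (w1 - w2)^2 > 0" using assms(3)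
    by (simp add: sum_power2_gt_zero_iff)
  thus ?thesis unfolding e by simp
qed

lemma edot_uw: "a \<noteq> 0 \<Longrightarrow> b \<noteq> 0 \<Longrightarrow> edot a b (a * x1, b * y1) (a * x2, b * y2) = x1 * x2 + y1 * y2"
  unfolding edot_def by (simp add: power2_eq_square)

lemma cross_uw: "cross2 (a * x1, b * y1) (a * x2, b * y2) = a * b * (x1 * y2 - y1 * x2)"
  unfolding cross2_def by (simp add: algebra_simps)

lemma dist_uw: "(dist (a * x1, b * y1) (a * x2, b * y2))^2 = a^2 * (x1 - x2)^2 + b^2 * (y1 - y2)^2"
  unfolding dist_pairs by (simp add: power_mult_distrib[symmetric] right_diff_distrib[symmetric])

definition rho0 :: "real \<Rightarrow> real \<Rightarrow> real" where
  "rho0 a b = (a^2 + b^2 + 2 * sqrt (a^4 - a^2 * b^2 + b^4)) / 3"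

definition r0 :: "real \<Rightarrow> real \<Rightarrow> real" where
  "r0 a b = sqrt (rho0 a b)"

lemma delta_facts:
  fixes a b :: real
  assumes "0 < b" "b < a"
  shows "(2 * sqrt (a^4 - a^2 * b^2 + b^4))^2 = 4 * (a^4 - a^2 * b^2 + b^4)"
    and "sqrt (a^4 - a^2 * b^2 + b^4) \<ge> 0"
proof -
  have e: "a^4 - a^2 * b^2 + b^4 = (a^2 - b^2)^2 + a^2 * b^2" by (simp add: algebra_simps power2_eq_square power4_eq_xxxx)
  have "0 \<le> (a^2 - b^2)^2 + a^2 * b^2" by simp
  hence nn: "a^4 - a^2 * b^2 + b^4 \<ge> 0" using e by linarith
  have "(sqrt (a^4 - a^2 * b^2 + b^4))^2 = a^4 - a^2 * b^2 + b^4" by (rule real_sqrt_pow2[OF nn])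
  thus "(2 * sqrt (a^4 - a^2 * b^2 + b^4))^2 = 4 * (a^4 - a^2 * b^2 + b^4)"
    by (simp add: power_mult_distrib)
  show "sqrt (a^4 - a^2 * b^2 + b^4) \<ge> 0" using nn by simp
qed

lemma rho0_root:
  fixes a b :: real
  assumes "0 < b" "b < a"
  shows "3 * (rho0 a b)^2 - 2 * (a^2 + b^2) * rho0 a b - (a^2 - b^2)^2 = 0"
    and "2 * (a^2 + b^2) \<le> 3 * rho0 a b"
    and "rho0 a b > a^2"
proof -
  define D where "D = sqrt (a^4 - a^2 * b^2 + b^4)"
  note df = delta_facts[OF assms, folded D_def]
  have r: "rho0 a b = (a^2 + b^2 + 2 * D) / 3" unfolding rho0_def D_def ..
  have D2: "4 * D^2 = 4 * (a^4 - a^2 * b^2 + b^4)" using df(1) by (simp add: power_mult_distrib)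
  have "3 * ((a^2 + b^2 + 2 * D) / 3)^2 - 2 * (a^2 + b^2) * ((a^2 + b^2 + 2 * D) / 3) - (a^2 - b^2)^2
      = (4 * D^2 - (a^2 + b^2)^2 - 3 * (a^2 - b^2)^2) / 3"
    by (simp add: field_simps power2_eq_square)
  also have "4 * D^2 - (a^2 + b^2)^2 - 3 * (a^2 - b^2)^2 = 0"
    unfolding D2 by (simp add: power2_eq_square power4_eq_xxxx algebra_simps)
  finally show "3 * (rho0 a b)^2 - 2 * (a^2 + b^2) * rho0 a b - (a^2 - b^2)^2 = 0"
    unfolding r by simp
  have "(2 * D)^2 - (a^2 + b^2)^2 = 3 * (a^2 - b^2)^2"
    using D2 by (simp add: power_mult_distrib power2_eq_square power4_eq_xxxx algebra_simps)
  hence h: "(a^2 + b^2)^2 \<le> (2 * D)^2" using zero_le_power2[of "a^2 - b^2"] by linarith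
  have "a^2 + b^2 \<le> 2 * D" by (rule power2_le_imp_le[OF h]) (use df(2) in simp)
  thus "2 * (a^2 + b^2) \<le> 3 * rho0 a b" unfolding r by simp
  have "(2 * D)^2 - (2 * a^2 - b^2)^2 = 3 * b^4"
    using D2 by (simp add: power_mult_distrib power2_eq_square power4_eq_xxxx algebra_simps)
  moreover have "b^4 > 0" using assms by simp
  ultimately have "(2 * a^2 - b^2)^2 < (2 * D)^2" by linarith
  hence h2: "(2 * a^2 - b^2)^2 < (2 * D)^2" .
  have "2 * a^2 - b^2 < 2 * D" by (rule power_less_imp_less_base[OF h2]) (use df(2) in simp)
  thus "rho0 a b > a^2" unfolding r by simp
qed

lemma r0_gt: "0 < b \<Longrightarrow> b < a \<Longrightarrow> r0 a b > a"
proof -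
  assume "0 < b" "b < a"
  hence h: "a^2 < rho0 a b" by (rule rho0_root(3))
  have "sqrt (a^2) < sqrt (rho0 a b)" using h by (rule real_sqrt_less_mono)
  moreover have "sqrt (a^2) = a" using \<open>0 < b\<close> \<open>b < a\<close> by simp
  ultimately show ?thesis unfolding r0_def by simp
qed


lemma core_cplx:
  fixes z1 z2 z3 B k :: complex
  assumes F12: "z1^2 + z2^2 - B * (z1^2 * z2^2 + 1) - 2 * k * z1 * z2 = 0"
    and F13: "z1^2 + z3^2 - B * (z1^2 * z3^2 + 1) - 2 * k * z1 * z3 = 0"
    and F23: "z2^2 + z3^2 - B * (z2^2 * z3^2 + 1) - 2 * k * z2 * z3 = 0"
    and d12: "z1 \<noteq> z2" and d13: "z1 \<noteq> z3" and d23: "z2 \<noteq> z3"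
  shows "2 * k = B^2 - 1" "z1 + z2 + z3 + B * (z1 * z2 * z3) = 0"
proof -
  have "(z2 - z3) * ((z2 + z3) * (1 - B * z1^2) - 2 * k * z1) = 0"
    using F12 F13 by algebra
  hence S1: "(z2 + z3) * (1 - B * z1^2) - 2 * k * z1 = 0" using d23 by simp
  have "(z1 - z3) * ((z1 + z3) * (1 - B * z2^2) - 2 * k * z2) = 0"
    using F12 F23 by algebra
  hence S2: "(z1 + z3) * (1 - B * z2^2) - 2 * k * z2 = 0" using d13 by simp
  have R1: "(1 - B * z1^2) * z2 * z3 - (z1^2 - B) = 0" using F12 S1 by algebra
  have R2: "(1 - B * z2^2) * z1 * z3 - (z2^2 - B) = 0" using F12 S2 by algebra
  have "(z1 - z2) * (z1 + z2 + z3 + B * (z1 * z2 * z3)) = 0" using R1 R2 by algebra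
  hence E1: "z1 + z2 + z3 + B * (z1 * z2 * z3) = 0" using d12 by simp
  have "(z1 - z2) * (z1 * z2 + z2 * z3 + z3 * z1 + B) =
     z1 * ((1 - B * z1^2) * z2 * z3 - (z1^2 - B)) - z2 * ((1 - B * z2^2) * z1 * z3 - (z2^2 - B))
     + (z1 - z2) * (z1 + z2) * (z1 + z2 + z3 + B * (z1 * z2 * z3))"
    by (simp add: algebra_simps power2_eq_square power3_eq_cube)
  hence "(z1 - z2) * (z1 * z2 + z2 * z3 + z3 * z1 + B) = 0" using R1 R2 E1 by simp
  hence E2: "z1 * z2 + z2 * z3 + z3 * z1 + B = 0" using d12 by simp
  have "(z1 - z2) * (2 * k + 1 + B * (z1 * z2 + z2 * z3 + z3 * z1)) =
      ((z1 + z3) * (1 - B * z2^2) - 2 * k * z2) - ((z2 + z3) * (1 - B * z1^2) - 2 * k * z1)"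
    by (simp add: algebra_simps power2_eq_square)
  hence "(z1 - z2) * (2 * k + 1 + B * (z1 * z2 + z2 * z3 + z3 * z1)) = 0" using S1 S2 by simp
  hence "2 * k + 1 + B * (z1 * z2 + z2 * z3 + z3 * z1) = 0" using d12 by simp
  thus "2 * k = B^2 - 1" using E2 by algebra
  show "z1 + z2 + z3 + B * (z1 * z2 * z3) = 0" by (rule E1)
qed

lemma F_from_E:
  fixes u1 w1 u2 w2 A B :: real
  assumes "u1^2 + w1^2 = 1" "u2^2 + w2^2 = 1"
    "1 - (u1 * u2 + w1 * w2) = A - B * (u1 * u2 - w1 * w2)"
  shows "(Complex u1 w1)^2 + (Complex u2 w2)^2 - of_real B * ((Complex u1 w1)^2 * (Complex u2 w2)^2 + 1)
     - 2 * of_real (1 - A) * Complex u1 w1 * Complex u2 w2 = 0"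
proof -
  have r: "u1 * u1 - w1 * w1 + (u2 * u2 - w2 * w2) - B * ((u1 * u1 - w1 * w1) * (u2 * u2 - w2 * w2) - 2 * u1 * w1 * (2 * u2 * w2) + 1)
      - 2 * (1 - A) * (u1 * u2 - w1 * w2) = 0"
    using assms by algebra
  have i: "2 * u1 * w1 + 2 * u2 * w2 - B * ((u1 * u1 - w1 * w1) * (2 * u2 * w2) + 2 * u1 * w1 * (u2 * u2 - w2 * w2))
      - 2 * (1 - A) * (u1 * w2 + w1 * u2) = 0"
    using assms by algebra
  show ?thesis using r i
    by (simp add: complex_eq_iff power2_eq_square algebra_simps)
qed

lemma core_real:
  fixes u1 w1 u2 w2 u3 w3 A B :: real
  assumes U1: "u1^2 + w1^2 = 1" and U2: "u2^2 + w2^2 = 1" and U3: "u3^2 + w3^2 = 1"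
    and E12: "1 - (u1 * u2 + w1 * w2) = A - B * (u1 * u2 - w1 * w2)"
    and E13: "1 - (u1 * u3 + w1 * w3) = A - B * (u1 * u3 - w1 * w3)"
    and E23: "1 - (u2 * u3 + w2 * w3) = A - B * (u2 * u3 - w2 * w3)"
    and d12: "(u1, w1) \<noteq> (u2, w2)" and d13: "(u1, w1) \<noteq> (u3, w3)" and d23: "(u2, w2) \<noteq> (u3, w3)"
  shows "B^2 + 2 * A - 3 = 0" "(u1 + u2 + u3)^2 + (w1 + w2 + w3)^2 = B^2"
proof -
  define z1 where "z1 = Complex u1 w1"
  define z2 where "z2 = Complex u2 w2"
  define z3 where "z3 = Complex u3 w3"
  have F12: "z1^2 + z2^2 - of_real B * (z1^2 * z2^2 + 1) - 2 * of_real (1 - A) * z1 * z2 = 0"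
    unfolding z1_def z2_def using F_from_E[OF U1 U2 E12] .
  have F13: "z1^2 + z3^2 - of_real B * (z1^2 * z3^2 + 1) - 2 * of_real (1 - A) * z1 * z3 = 0"
    unfolding z1_def z3_def using F_from_E[OF U1 U3 E13] .
  have F23: "z2^2 + z3^2 - of_real B * (z2^2 * z3^2 + 1) - 2 * of_real (1 - A) * z2 * z3 = 0"
    unfolding z2_def z3_def using F_from_E[OF U2 U3 E23] .
  have "z1 \<noteq> z2" "z1 \<noteq> z3" "z2 \<noteq> z3" using d12 d13 d23 by (auto simp: z1_def z2_def z3_def)
  note c = core_cplx[OF F12 F13 F23 this]
  have "complex_of_real (2 * (1 - A)) = complex_of_real (B^2 - 1)" using c(1) by simp
  hence "2 * (1 - A) = B^2 - 1" by (simp only: of_real_eq_iff)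
  thus "B^2 + 2 * A - 3 = 0" by simp
  have n1: "norm z1 = 1" using U1 by (simp add: z1_def cmod_def)
  have n2: "norm z2 = 1" using U2 by (simp add: z2_def cmod_def)
  have n3: "norm z3 = 1" using U3 by (simp add: z3_def cmod_def)
  have "z1 + z2 + z3 = - (of_real B * (z1 * z2 * z3))" using c(2) by (simp add: eq_neg_iff_add_eq_0)
  hence "norm (z1 + z2 + z3) = \<bar>B\<bar>" by (simp add: norm_mult n1 n2 n3)
  hence "(norm (z1 + z2 + z3))^2 = B^2" by simp
  thus "(u1 + u2 + u3)^2 + (w1 + w2 + w3)^2 = B^2"
    by (simp add: z1_def z2_def z3_def cmod_def)
qed


context orbit
begin

lemma v2: "edot a b P2 (excenter P1 P2 P3) = 1"
    "edot a b P2 (excenter P3 P1 P2) = 1"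
    "dist P2 P1 * (1 - edot a b P2 P3) = dist P2 P3 * (1 - edot a b P2 P1)"
    "cross2 (excenter P2 P3 P1 - P2) (ellipse_normal a b P2) = 0"
  using orbit.v1[OF rot] by auto

lemma rot2: "orbit a b P3 P1 P2" using orbit.rot[OF rot] .

lemma v3: "edot a b P3 (excenter P2 P3 P1) = 1"
    "edot a b P3 (excenter P1 P2 P3) = 1"
    "dist P3 P2 * (1 - edot a b P3 P1) = dist P3 P1 * (1 - edot a b P3 P2)"
    "cross2 (excenter P3 P1 P2 - P3) (ellipse_normal a b P3) = 0"
  using orbit.v1[OF rot2] by auto

end

locale orbit_c = orbit +
  fixes u1 w1 u2 w2 u3 w3 :: real
  assumes P_uw: "P1 = (a * u1, b * w1)" "P2 = (a * u2, b * w2)" "P3 = (a * u3, b * w3)"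
begin

definition "l1 = dist P2 P3"
definition "l2 = dist P3 P1"
definition "l3 = dist P1 P2"
definition "c12 = 1 - (u1 * u2 + w1 * w2)"
definition "c13 = 1 - (u1 * u3 + w1 * w3)"
definition "c23 = 1 - (u2 * u3 + w2 * w3)"
definition "J = c12 / l3"
definition "mu = J^2"

lemma a_ne: "a \<noteq> 0" and b_ne: "b \<noteq> 0" using a0 b0 by auto

lemma unit_from_on: "on_ellipse a b (a * u, b * w) \<Longrightarrow> u^2 + w^2 = 1"
  unfolding on_ellipse_def using a_ne b_ne by (simp add: power_mult_distrib)

lemma units: "u1^2 + w1^2 = 1" "u2^2 + w2^2 = 1" "u3^2 + w3^2 = 1"
  using unit_from_on on1 on2 on3 P_uw by metis+

lemma uw_distinct: "(u1, w1) \<noteq> (u2, w2)" "(u1, w1) \<noteq> (u3, w3)" "(u2, w2) \<noteq> (u3, w3)"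
  using distinct P_uw by auto

lemma c_pos': "c12 > 0" "c13 > 0" "c23 > 0"
  unfolding c12_def c13_def c23_def using c_pos units uw_distinct by auto

lemma edots:
  "edot a b P1 P2 = u1 * u2 + w1 * w2" "edot a b P1 P3 = u1 * u3 + w1 * w3"
  "edot a b P2 P3 = u2 * u3 + w2 * w3" "edot a b P2 P1 = u1 * u2 + w1 * w2"
  "edot a b P3 P1 = u1 * u3 + w1 * w3" "edot a b P3 P2 = u2 * u3 + w2 * w3"
  unfolding P_uw edot_uw[OF a_ne b_ne] by (simp_all add: mult.commute)

lemma crosses:
  "cross2 P1 P2 = a * b * (u1 * w2 - w1 * u2)" "cross2 P1 P3 = a * b * (u1 * w3 - w1 * u3)"
  "cross2 P2 P3 = a * b * (u2 * w3 - w2 * u3)"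
  unfolding P_uw cross_uw by simp_all

lemma lsq: "l3^2 = a^2 * (u1 - u2)^2 + b^2 * (w1 - w2)^2"
   "l2^2 = a^2 * (u1 - u3)^2 + b^2 * (w1 - w3)^2"
   "l1^2 = a^2 * (u2 - u3)^2 + b^2 * (w2 - w3)^2"
  unfolding l1_def l2_def l3_def unfolding P_uw dist_uw
  by (simp_all add: power2_commute dist_commute)

lemma l_pos: "l1 > 0" "l2 > 0" "l3 > 0"
  unfolding l1_def l2_def l3_def using distinct by auto

lemma lrel: "l2 * c12 = l3 * c13" "l3 * c23 = l1 * c12" "l1 * c13 = l2 * c23"
proof -
  show "l2 * c12 = l3 * c13" using v1(3) unfolding l2_def l3_def c12_def c13_def edots
    by (simp add: dist_commute)
  show "l3 * c23 = l1 * c12" using v2(3) unfolding l1_def l3_def c12_def c23_def edots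
    by (simp add: dist_commute)
  show "l1 * c13 = l2 * c23" using v3(3) unfolding l1_def l2_def c13_def c23_def edots
    by (simp add: dist_commute)
qed

lemma J_rel: "c12 = J * l3" "c13 = J * l2" "c23 = J * l1"
proof -
  show "c12 = J * l3" unfolding J_def using l_pos by simp
  show "c13 = J * l2" unfolding J_def using l_pos lrel(1) by (simp add: field_simps)
  show "c23 = J * l1" unfolding J_def using l_pos lrel(2) by (simp add: field_simps)
qed

lemma J_pos: "J > 0" unfolding J_def using c_pos' l_pos by simp

lemma E_gen:
  assumes c: "c > 0" and cJ: "c = J * l" and l2: "l^2 = c * K"
  shows "c = mu * K"
proof -
  have "c * c = mu * (c * K)" unfolding mu_def using cJ l2
    by (metis power2_eq_square power_mult_distrib mult.commute)
  thus ?thesis using c by simp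
qed

lemma Es:
  "1 - (u1 * u2 + w1 * w2) = mu * (a^2 + b^2) - mu * (a^2 - b^2) * (u1 * u2 - w1 * w2)"
  "1 - (u1 * u3 + w1 * w3) = mu * (a^2 + b^2) - mu * (a^2 - b^2) * (u1 * u3 - w1 * w3)"
  "1 - (u2 * u3 + w2 * w3) = mu * (a^2 + b^2) - mu * (a^2 - b^2) * (u2 * u3 - w2 * w3)"
proof -
  have "c12 = mu * ((a^2 + b^2) - (a^2 - b^2) * (u1 * u2 - w1 * w2))"
    using E_gen[OF c_pos'(1) J_rel(1)] lsq(1) I6[OF units(1,2)] unfolding c12_def by simp
  thus "1 - (u1 * u2 + w1 * w2) = mu * (a^2 + b^2) - mu * (a^2 - b^2) * (u1 * u2 - w1 * w2)"
    unfolding c12_def by (simp add: algebra_simps)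
  have "c13 = mu * ((a^2 + b^2) - (a^2 - b^2) * (u1 * u3 - w1 * w3))"
    using E_gen[OF c_pos'(2) J_rel(2)] lsq(2) I6[OF units(1,3)] unfolding c13_def by simp
  thus "1 - (u1 * u3 + w1 * w3) = mu * (a^2 + b^2) - mu * (a^2 - b^2) * (u1 * u3 - w1 * w3)"
    unfolding c13_def by (simp add: algebra_simps)
  have "c23 = mu * ((a^2 + b^2) - (a^2 - b^2) * (u2 * u3 - w2 * w3))"
    using E_gen[OF c_pos'(3) J_rel(3)] lsq(3) I6[OF units(2,3)] unfolding c23_def by simp
  thus "1 - (u2 * u3 + w2 * w3) = mu * (a^2 + b^2) - mu * (a^2 - b^2) * (u2 * u3 - w2 * w3)"
    unfolding c23_def by (simp add: algebra_simps)
qed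

lemma core:
  "(mu * (a^2 - b^2))^2 + 2 * (mu * (a^2 + b^2)) - 3 = 0"
  "(u1 + u2 + u3)^2 + (w1 + w2 + w3)^2 = (mu * (a^2 - b^2))^2"
  using core_real[OF units Es uw_distinct] by (simp_all add: algebra_simps)

lemma mu_pos: "mu > 0" unfolding mu_def using J_pos by simp

lemma B_small: "(mu * (a^2 - b^2))^2 < 1"
proof (rule ccontr)
  assume h: "\<not> ?thesis"
  have B0: "mu * (a^2 - b^2) \<ge> 0" using mu_pos ab b0 by (simp add: power_strict_mono less_imp_le)
  have "mu * (a^2 - b^2) \<ge> 1" using h B0 by (smt (verit) power2_le_imp_le one_power2)
  moreover have "mu * (a^2 + b^2) > mu * (a^2 - b^2)" using mu_pos b0 by simp
  ultimately show False using core(1) h by linarith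
qed

lemma inv_J: "1 / J = r0 a b"
proof -
  define rho where "rho = 1 / mu"
  have rp: "rho > 0" unfolding rho_def using mu_pos by simp
  have q: "3 * rho^2 - 2 * (a^2 + b^2) * rho - (a^2 - b^2)^2 = 0"
  proof -
    have "rho^2 * ((mu * (a^2 - b^2))^2 + 2 * (mu * (a^2 + b^2)) - 3) = 0" using core(1) by simp
    thus ?thesis unfolding rho_def using mu_pos by (simp add: field_simps power2_eq_square)
  qed
  note r = rho0_root[OF b0 ab]
  have "(rho - rho0 a b) * (3 * (rho + rho0 a b) - 2 * (a^2 + b^2)) = 0"
    using q r(1) by algebra
  moreover have "3 * (rho + rho0 a b) - 2 * (a^2 + b^2) = 3 * rho + (3 * rho0 a b - 2 * (a^2 + b^2))"
    by (simp add: algebra_simps)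
  hence "3 * (rho + rho0 a b) - 2 * (a^2 + b^2) > 0" using r(2) rp by linarith
  ultimately have "rho = rho0 a b" by simp
  hence "(1 / J)^2 = rho0 a b" unfolding rho_def mu_def by (simp add: power_one_over)
  hence "sqrt ((1 / J)^2) = r0 a b" unfolding r0_def by simp
  thus ?thesis using J_pos by simp
qed

lemma sumc: "2 * (c12 + c13 + c23) - 8 > 0"
proof -
  have "2 * (c12 + c13 + c23) - 8 = 1 - ((u1 + u2 + u3)^2 + (w1 + w2 + w3)^2)"
    unfolding c12_def c13_def c23_def using units by algebra
  thus ?thesis using core(2) B_small by simp
qed

end



lemma edot_lin: "edot a b P (x + y) = edot a b P x + edot a b P y"
  "edot a b P (c *\<^sub>R x) = c * edot a b P x" "edot a b P (x - y) = edot a b P x - edot a b P y"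
  unfolding edot_def by (simp_all add: algebra_simps add_divide_distrib diff_divide_distrib)

lemma cross2_lin: "cross2 P (x + y) = cross2 P x + cross2 P y"
  "cross2 P (c *\<^sub>R x) = c * cross2 P x" "cross2 P (x - y) = cross2 P x - cross2 P y"
  unfolding cross2_def by (simp_all add: algebra_simps)

lemma pole_cross:
  fixes a b u1 w1 u2 w2 :: real and P Q Y :: pt
  assumes a: "a \<noteq> 0" and b: "b \<noteq> 0" and U: "u1^2 + w1^2 = 1"
    and P: "P = (a * u1, b * w1)" and Q: "Q = (a * u2, b * w2)"
    and h1: "edot a b P Y = 1" and h2: "edot a b Q Y = 1"
  shows "cross2 P Y * cross2 P Q = (a * b)^2 * (1 - (u1 * u2 + w1 * w2))"
proof -
  obtain e1 e2 where Y: "Y = (a * e1, b * e2)"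
    using a b by (metis mult.commute nonzero_eq_divide_eq prod.collapse)
  have e1: "u1 * e1 + w1 * e2 = 1" using h1 unfolding P Y edot_uw[OF a b] .
  have e2: "u2 * e1 + w2 * e2 = 1" using h2 unfolding Q Y edot_uw[OF a b] .
  note s = SL1[OF U e1 e2]
  have "cross2 P Y * cross2 P Q = (a * b)^2 * ((u1 * e2 - w1 * e1) * (u1 * w2 - w1 * u2))"
    unfolding P Q Y cross_uw by (simp add: power2_eq_square mult_ac)
  also have "\<dots> = (a * b)^2 * (1 - (u1 * u2 + w1 * w2))" using s by simp
  finally show ?thesis .
qed

lemma line_inj:
  fixes a b :: real and P Y Z :: pt
  assumes a: "a \<noteq> 0" and b: "b \<noteq> 0" and on: "on_ellipse a b P"
    and e: "edot a b P Y = edot a b P Z" and c: "cross2 P Y = cross2 P Z"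
  shows "Y = Z"
proof -
  obtain px py y1 y2 z1 z2 where v: "P = (px, py)" "Y = (y1, y2)" "Z = (z1, z2)" by (metis prod.collapse)
  define d1 where "d1 = y1 - z1"
  define d2 where "d2 = y2 - z2"
  have o: "px^2 / a^2 + py^2 / b^2 = 1" using on v unfolding on_ellipse_def by simp
  have "px / a^2 * d1 + py / b^2 * d2 = (px * y1 / a^2 + py * y2 / b^2) - (px * z1 / a^2 + py * z2 / b^2)"
    unfolding d1_def d2_def using a b by (simp add: field_simps)
  also have "\<dots> = 0" using e v unfolding edot_def by simp
  finally have E: "px / a^2 * d1 + py / b^2 * d2 = 0" .
  have C: "px * d2 - py * d1 = 0" using c v unfolding cross2_def d1_def d2_def by (simp add: algebra_simps)
  have "d1 = d1 * (px^2 / a^2 + py^2 / b^2)" using o by simp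
  also have "\<dots> = px * (px / a^2 * d1 + py / b^2 * d2) - py / b^2 * (px * d2 - py * d1)"
    using a b by (simp add: field_simps power2_eq_square)
  also have "\<dots> = 0" using E C by simp
  finally have "d1 = 0" .
  have "d2 = d2 * (px^2 / a^2 + py^2 / b^2)" using o by simp
  also have "\<dots> = py * (px / a^2 * d1 + py / b^2 * d2) + px / a^2 * (px * d2 - py * d1)"
    using a b by (simp add: field_simps power2_eq_square)
  also have "\<dots> = 0" using E C by simp
  finally have "d2 = 0" .
  show ?thesis using \<open>d1 = 0\<close> \<open>d2 = 0\<close> v unfolding d1_def d2_def by simp
qed

context orbit_c
begin

definition "N1 = c12 + c13 - c23"
definition "N2 = c12 + c23 - c13"
definition "N3 = c13 + c23 - c12"
definition "x12 = u1 * w2 - w1 * u2"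
definition "x13 = u1 * w3 - w1 * u3"
definition "x23 = u2 * w3 - w2 * u3"

lemma I5': "N1 * N2 * N3 = c12 * c13 * c23 * (2 * (c12 + c13 + c23) - 8)"
  unfolding N1_def N2_def N3_def c12_def c13_def c23_def using units by algebra

lemma I4': "2 * c12 * c13 * x23 = N1 * (x12 + x23 - x13)"
  "2 * c12 * c23 * (- x13) = N2 * (x12 + x23 - x13)"
  "2 * c13 * c23 * x12 = N3 * (x12 + x23 - x13)"
  unfolding N1_def N2_def N3_def c12_def c13_def c23_def x12_def x13_def x23_def using units
  by algebra+

lemma I3': "c12 * c13 + x12 * x13 = N1"
  unfolding N1_def c12_def c13_def c23_def x12_def x13_def using units by algebra

lemma I2': "x12^2 + c12^2 = 2 * c12" "x13^2 + c13^2 = 2 * c13"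
  unfolding c12_def c13_def x12_def x13_def using units by algebra+

lemma N_pos: "N1 > 0" "N2 > 0" "N3 > 0"
proof -
  have prod: "N1 * N2 * N3 > 0" unfolding I5' using c_pos' sumc by simp
  have s12: "N1 + N2 > 0" "N1 + N3 > 0" "N2 + N3 > 0"
    unfolding N1_def N2_def N3_def using c_pos' by simp_all
  show "N1 > 0"
  proof (rule ccontr)
    assume "\<not> N1 > 0"
    hence "N2 > 0" "N3 > 0" using s12 by linarith+
    hence "N2 * N3 > 0" by simp
    hence "N1 * (N2 * N3) \<le> 0" using \<open>\<not> N1 > 0\<close> by (simp add: mult_nonpos_nonneg)
    thus False using prod by (simp add: mult.assoc)
  qed
  show "N2 > 0"
  proof (rule ccontr)
    assume "\<not> N2 > 0"
    hence "N1 > 0" "N3 > 0" using s12 by linarith+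
    hence "N1 * N3 > 0" by simp
    hence "N2 * (N1 * N3) \<le> 0" using \<open>\<not> N2 > 0\<close> by (simp add: mult_nonpos_nonneg)
    thus False using prod by (simp add: algebra_simps)
  qed
  show "N3 > 0"
  proof (rule ccontr)
    assume "\<not> N3 > 0"
    hence "N1 > 0" "N2 > 0" using s12 by linarith+
    hence "N1 * N2 > 0" by simp
    hence "N3 * (N1 * N2) \<le> 0" using \<open>\<not> N3 > 0\<close> by (simp add: mult_nonpos_nonneg)
    thus False using prod by (simp add: algebra_simps)
  qed
qed

lemma s_ne: "x12 + x23 - x13 \<noteq> 0"
proof -
  have "cross2 (P2 - P1) (P3 - P1) = a * b * (x12 + x23 - x13)"
    unfolding P_uw x12_def x13_def x23_def cross2_def by (simp add: algebra_simps)
  thus ?thesis using S0 by auto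
qed

lemma x_neg: "x12 * x13 < 0"
proof -
  define s where "s = x12 + x23 - x13"
  have s0: "s \<noteq> 0" using s_ne unfolding s_def .
  have h2: "x12 = N3 * s / (2 * c13 * c23)" using I4'(3) c_pos' unfolding s_def by (simp add: field_simps)
  have h3: "x13 = - (N2 * s / (2 * c12 * c23))" using I4'(2) c_pos' unfolding s_def by (simp add: field_simps)
  have "x12 * x13 = - ((N3 * N2 * s^2) / (4 * c13 * c23 * c12 * c23))"
    unfolding h2 h3 by (simp add: power2_eq_square field_simps)
  moreover have "(N3 * N2 * s^2) / (4 * c13 * c23 * c12 * c23) > 0"
    using N_pos c_pos' s0 by simp
  ultimately show ?thesis by simp
qed

definition "I1 = excenter P1 P2 P3"
definition "I2 = excenter P2 P3 P1"
definition "I3 = excenter P3 P1 P2"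
definition "K = (a * b)^2"

lemma K_pos: "K > 0" unfolding K_def using a0 b0 by simp

lemma X12: "cross2 P1 P2 = a * b * x12" and X13: "cross2 P1 P3 = a * b * x13"
  unfolding crosses x12_def x13_def by simp_all

lemma p_rel: "cross2 P1 I3 * cross2 P1 P2 = K * c12"
proof -
  have h1: "edot a b P1 I3 = 1" using v1(1) unfolding I3_def .
  have h2: "edot a b P2 I3 = 1" using v2(2) unfolding I3_def .
  show ?thesis using pole_cross[OF a_ne b_ne units(1) P_uw(1) P_uw(2) h1 h2] unfolding K_def c12_def .
qed

lemma q_rel: "cross2 P1 I2 * cross2 P1 P3 = K * c13"
proof -
  have h1: "edot a b P1 I2 = 1" using v1(2) unfolding I2_def .
  have h2: "edot a b P3 I2 = 1" using v3(1) unfolding I2_def .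
  show ?thesis using pole_cross[OF a_ne b_ne units(1) P_uw(1) P_uw(3) h1 h2] unfolding K_def c13_def .
qed

lemma XX: "(cross2 P1 P2)^2 + K * c12^2 = 2 * K * c12" "(cross2 P1 P3)^2 + K * c13^2 = 2 * K * c13"
  "K * (c12 * c13) + cross2 P1 P2 * cross2 P1 P3 = K * N1" "cross2 P1 P2 * cross2 P1 P3 < 0"
proof -
  have "(cross2 P1 P2)^2 + K * c12^2 = K * (x12^2 + c12^2)"
    unfolding X12 K_def by (simp add: power_mult_distrib algebra_simps)
  thus "(cross2 P1 P2)^2 + K * c12^2 = 2 * K * c12" using I2'(1) by simp
  have "(cross2 P1 P3)^2 + K * c13^2 = K * (x13^2 + c13^2)"
    unfolding X13 K_def by (simp add: power_mult_distrib algebra_simps)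
  thus "(cross2 P1 P3)^2 + K * c13^2 = 2 * K * c13" using I2'(2) by simp
  have "K * (c12 * c13) + cross2 P1 P2 * cross2 P1 P3 = K * (c12 * c13 + x12 * x13)"
    unfolding X12 X13 K_def by (simp add: power2_eq_square algebra_simps)
  thus "K * (c12 * c13) + cross2 P1 P2 * cross2 P1 P3 = K * N1" using I3' by simp
  have "cross2 P1 P2 * cross2 P1 P3 = K * (x12 * x13)"
    unfolding X12 X13 K_def by (simp add: power2_eq_square algebra_simps)
  moreover have "K * (x12 * x13) < 0" using x_neg K_pos by (simp add: mult_pos_neg)
  ultimately show "cross2 P1 P2 * cross2 P1 P3 < 0" by simp
qed

lemma edot11: "edot a b P1 P1 = 1" using on1 unfolding edot_def on_ellipse_def by (simp add: power2_eq_square)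

lemma seg_facts:
  assumes "X \<in> closed_segment I2 I3"
  obtains u where "0 \<le> u" "u \<le> 1" "edot a b P1 X = 1" "cross2 P1 X = (1 - u) * cross2 P1 I2 + u * cross2 P1 I3"
proof -
  obtain u where u: "0 \<le> u" "u \<le> 1" "X = (1 - u) *\<^sub>R I2 + u *\<^sub>R I3" using assms by (auto simp: in_segment)
  have "edot a b P1 X = (1 - u) * edot a b P1 I2 + u * edot a b P1 I3" unfolding u(3) edot_lin ..
  also have "\<dots> = 1" using v1(1,2) unfolding I2_def I3_def by simp
  finally have "edot a b P1 X = 1" .
  moreover have "cross2 P1 X = (1 - u) * cross2 P1 I2 + u * cross2 P1 I3" unfolding u(3) cross2_lin ..
  ultimately show ?thesis using that u(1,2) by blast
qed

lemma L1_bad: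
  assumes X: "X \<in> closed_segment I2 I3" and t: "X = t *\<^sub>R (P3 - P2)"
  shows False
proof -
  obtain u where u: "0 \<le> u" "u \<le> 1" "edot a b P1 X = 1" "cross2 P1 X = (1 - u) * cross2 P1 I2 + u * cross2 P1 I3"
    by (rule seg_facts[OF X])
  have ht: "t * (c12 - c13) = 1" using u(3) unfolding t edot_lin edots c12_def c13_def
    by (simp add: algebra_simps)
  have hl: "cross2 P1 X = t * (cross2 P1 P3 - cross2 P1 P2)" unfolding t cross2_lin ..
  have hp: "cross2 P1 I3 * cross2 P1 P2 = K * c12" by (rule p_rel)
  have hq: "cross2 P1 I2 * cross2 P1 P3 = K * c13" by (rule q_rel)
  show False using SL2[OF K_pos c_pos'(1) c_pos'(2) XX(1) XX(2) hp hq ht hl u(4) u(1) u(2)] .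
qed

lemma L1_good:
  assumes X: "X \<in> closed_segment I2 I3" and t: "X = t *\<^sub>R (P2 - P1) \<or> X = t *\<^sub>R (P1 - P3)"
  shows "norm X = r0 a b"
proof -
  obtain u where u: "0 \<le> u" "u \<le> 1" "edot a b P1 X = 1" "cross2 P1 X = (1 - u) * cross2 P1 I2 + u * cross2 P1 I3"
    by (rule seg_facts[OF X])
  from t show ?thesis
  proof
    assume t1: "X = t *\<^sub>R (P2 - P1)"
    have "t * (- c12) = 1" using u(3) unfolding t1 edot_lin edots edot11 c12_def by (simp add: algebra_simps)
    hence "t = - 1 / c12" using c_pos'(1) by (simp add: field_simps)
    hence "\<bar>t\<bar> = 1 / c12" using c_pos'(1) by simp
    moreover have "norm (P2 - P1) = l3" unfolding l3_def by (simp add: dist_norm norm_minus_commute)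
    ultimately have "norm X = l3 / c12" unfolding t1 by simp
    also have "\<dots> = 1 / J" using J_rel(1) l_pos by simp
    finally show ?thesis using inv_J by simp
  next
    assume t1: "X = t *\<^sub>R (P1 - P3)"
    have "t * c13 = 1" using u(3) unfolding t1 edot_lin edots edot11 c13_def by (simp add: algebra_simps)
    hence "t = 1 / c13" using c_pos'(2) by (simp add: field_simps)
    hence "\<bar>t\<bar> = 1 / c13" using c_pos'(2) by simp
    moreover have "norm (P1 - P3) = l2" unfolding l2_def by (simp add: dist_norm norm_minus_commute)
    ultimately have "norm X = l2 / c13" unfolding t1 by simp
    also have "\<dots> = 1 / J" using J_rel(2) l_pos by simp
    finally show ?thesis using inv_J by simp
  qed
qed

lemma L1_nonempty: "(- 1 / c12) *\<^sub>R (P2 - P1) \<in> closed_segment I2 I3"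
proof -
  define p where "p = cross2 P1 I3"
  define q where "q = cross2 P1 I2"
  have hp: "p * cross2 P1 P2 = K * c12" unfolding p_def by (rule p_rel)
  have hq: "q * cross2 P1 P3 = K * c13" unfolding q_def by (rule q_rel)
  note s3 = SL3[OF K_pos c_pos'(1) c_pos'(2) hp hq XX(4) XX(3) N_pos(1)]
  define u where "u = (- cross2 P1 P2 / c12 - q) / (p - q)"
  have u: "0 \<le> u" "u \<le> 1" using s3 unfolding u_def by auto
  define Z where "Z = (1 - u) *\<^sub>R I2 + u *\<^sub>R I3"
  have Zs: "Z \<in> closed_segment I2 I3" unfolding Z_def in_segment using u by blast
  have eZ: "edot a b P1 Z = 1" unfolding Z_def edot_lin using v1(1,2) unfolding I2_def I3_def by simp
  have cZ: "cross2 P1 Z = (1 - u) * q + u * p" unfolding Z_def cross2_lin p_def q_def ..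
  also have "\<dots> = q + u * (p - q)" by (simp add: algebra_simps)
  also have "\<dots> = - cross2 P1 P2 / c12" unfolding u_def using s3(1) by simp
  finally have cZ': "cross2 P1 Z = - cross2 P1 P2 / c12" .
  define X0 where "X0 = (- 1 / c12) *\<^sub>R (P2 - P1)"
  have eX: "edot a b P1 X0 = 1" unfolding X0_def edot_lin edots edot11 c12_def using c_pos'(1)
    unfolding c12_def by (simp add: field_simps)
  have cs: "cross2 P1 P1 = 0" by (simp add: cross2_def mult.commute)
  have cX: "cross2 P1 X0 = - cross2 P1 P2 / c12" unfolding X0_def cross2_lin cs by simp
  have "X0 = Z" using line_inj[OF a_ne b_ne on1, of X0 Z] eX eZ cX cZ' by simp
  thus ?thesis using Zs unfolding X0_def by simp
qed

end



lemma exc_side: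
  fixes A B C :: pt
  defines "la \<equiv> dist B C" and "lb \<equiv> dist C A" and "lc \<equiv> dist A B"
  assumes D2: "la - lb + lc > 0" and D3: "la + lb - lc > 0"
  shows "(dist (excenter B C A) (excenter C A B))^2 = 4 * la^2 * lb * lc / ((la - lb + lc) * (la + lb - lc))"
proof -
  define D2' where "D2' = la - lb + lc"
  define D3' where "D3' = la + lb - lc"
  define w where "w = (- lb) *\<^sub>R (B - A) + lc *\<^sub>R (C - A)"
  have e2: "- dist C A + dist A B + dist B C \<noteq> 0" using D2 unfolding la_def lb_def lc_def by simp
  have e3: "- dist A B + dist B C + dist C A \<noteq> 0" using D3 unfolding la_def lb_def lc_def by simp
  have s2: "D2' *\<^sub>R (excenter B C A - A) = w"
  proof -
    have "D2' *\<^sub>R (excenter B C A - A) = (- dist C A + dist A B + dist B C) *\<^sub>R (excenter B C A - B) + D2' *\<^sub>R (B - A)"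
      unfolding D2'_def la_def lb_def lc_def by (simp add: algebra_simps)
    also have "\<dots> = w" unfolding exc_shift[OF e2] unfolding w_def D2'_def la_def lb_def lc_def
      by (simp add: algebra_simps dist_commute)
    finally show ?thesis .
  qed
  have s3: "D3' *\<^sub>R (excenter C A B - A) = - w"
  proof -
    have "D3' *\<^sub>R (excenter C A B - A) = (- dist A B + dist B C + dist C A) *\<^sub>R (excenter C A B - C) + D3' *\<^sub>R (C - A)"
      unfolding D3'_def la_def lb_def lc_def by (simp add: algebra_simps)
    also have "\<dots> = - w" unfolding exc_shift[OF e3] unfolding w_def D3'_def la_def lb_def lc_def
      by (simp add: algebra_simps dist_commute)
    finally show ?thesis .
  qed
  have d2: "D2' \<noteq> 0" "D3' \<noteq> 0" using D2 D3 unfolding D2'_def D3'_def by auto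
  have "excenter B C A - excenter C A B = (excenter B C A - A) - (excenter C A B - A)" by simp
  also have "\<dots> = (1 / D2') *\<^sub>R w - (1 / D3') *\<^sub>R (- w)"
    using scaleR_solve[OF d2(1) s2] scaleR_solve[OF d2(2) s3] by simp
  also have "\<dots> = (1 / D2' + 1 / D3') *\<^sub>R w" by (simp add: algebra_simps)
  finally have diff: "excenter B C A - excenter C A B = (1 / D2' + 1 / D3') *\<^sub>R w" .
  have ww: "(norm w)^2 = lb * lc * (D2' * D3')"
  proof -
    obtain ax ay bx yb cx cy where P: "A = (ax, ay)" "B = (bx, yb)" "C = (cx, cy)"
      by (metis prod.collapse)
    have la2: "la^2 = (bx - cx)^2 + (yb - cy)^2" unfolding la_def P dist_pairs by simp
    have lb2: "lb^2 = (cx - ax)^2 + (cy - ay)^2" unfolding lb_def P dist_pairs by simp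
    have lc2: "lc^2 = (bx - ax)^2 + (yb - ay)^2" unfolding lc_def P dist_pairs by (simp add: power2_commute)
    have "(norm w)^2 = (- lb * (bx - ax) + lc * (cx - ax))^2 + (- lb * (yb - ay) + lc * (cy - ay))^2"
      unfolding w_def P by (simp add: norm_Pair)
    also have "\<dots> = lb * lc * (D2' * D3')"
      unfolding D2'_def D3'_def using la2 lb2 lc2 by algebra
    finally show ?thesis .
  qed
  have "(dist (excenter B C A) (excenter C A B))^2 = (1 / D2' + 1 / D3')^2 * (norm w)^2"
    unfolding dist_norm diff by (simp add: power_mult_distrib)
  also have "(1 / D2' + 1 / D3') = 2 * la / (D2' * D3')"
    using d2 unfolding D2'_def D3'_def by (simp add: field_simps)
  also have "(2 * la / (D2' * D3'))^2 * (norm w)^2 = 4 * la^2 * lb * lc / (D2' * D3')"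
    unfolding ww using d2 by (simp add: field_simps power2_eq_square)
  finally show ?thesis unfolding D2'_def D3'_def .
qed

lemma cross_sum_id: "cross2 Q R *\<^sub>R P + cross2 R P *\<^sub>R Q + cross2 P Q *\<^sub>R R = 0"
  by (simp add: cross2_def prod_eq_iff algebra_simps)

lemma weights_zero:
  fixes l1 l2 l3 D1 D2 D3 \<alpha> \<beta> \<gamma> :: real and P1 P2 P3 :: pt
  assumes E1: "l1 * (\<gamma> - \<beta>) + (l3 - l2) * \<alpha> = 0"
    and E2: "l2 * (\<alpha> - \<gamma>) + (l1 - l3) * \<beta> = 0"
    and E3: "l3 * (\<beta> - \<alpha>) + (l2 - l1) * \<gamma> = 0"
    and D: "D1 = - l1 + l2 + l3" "D2 = l1 - l2 + l3" "D3 = l1 + l2 - l3"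
    and pos: "l1 * D1 > 0" "l2 * D2 > 0" "l3 * D3 > 0"
    and S: "\<alpha> + \<beta> + \<gamma> \<noteq> 0"
    and id: "\<alpha> *\<^sub>R P1 + \<beta> *\<^sub>R P2 + \<gamma> *\<^sub>R P3 = 0"
  shows "(l1 * D1) *\<^sub>R P1 + (l2 * D2) *\<^sub>R P2 + (l3 * D3) *\<^sub>R P3 = 0"
proof -
  define v1 where "v1 = l1 * D1"
  define v2 where "v2 = l2 * D2"
  define v3 where "v3 = l3 * D3"
  have r1: "\<alpha> * v2 = \<beta> * v1" unfolding v1_def v2_def D using E1 E2 by algebra
  have r3: "\<gamma> * v1 = \<alpha> * v3" unfolding v1_def v3_def D using E1 E3 by algebra
  have v1p: "v1 > 0" using pos unfolding v1_def by simp
  define t where "t = \<alpha> / v1"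
  have a: "\<alpha> = t * v1" unfolding t_def using v1p by simp
  have b: "\<beta> = t * v2" using r1 v1p unfolding t_def by (simp add: field_simps)
  have c: "\<gamma> = t * v3" using r3 v1p unfolding t_def by (simp add: field_simps)
  have "t * (v1 + v2 + v3) \<noteq> 0" using S unfolding a b c by (simp add: algebra_simps)
  hence t0: "t \<noteq> 0" by auto
  have "t *\<^sub>R (v1 *\<^sub>R P1 + v2 *\<^sub>R P2 + v3 *\<^sub>R P3) = 0"
    using id unfolding a b c by (simp add: algebra_simps)
  hence "v1 *\<^sub>R P1 + v2 *\<^sub>R P2 + v3 *\<^sub>R P3 = 0" using t0 by simp
  thus ?thesis unfolding v1_def v2_def v3_def .
qed

context orbit
begin

lemma n1_ne: "ellipse_normal a b P1 \<noteq> 0"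
proof
  assume "ellipse_normal a b P1 = 0"
  hence "edot a b P1 P1 = 0" unfolding normal_inner[symmetric] by simp
  moreover have "edot a b P1 P1 = 1" using on1 unfolding edot_def on_ellipse_def by (simp add: power2_eq_square)
  ultimately show False by simp
qed

lemma I23_ne: "excenter P2 P3 P1 \<noteq> excenter P3 P1 P2"
proof
  assume h: "excenter P2 P3 P1 = excenter P3 P1 P2"
  have D2: "dist P2 P3 - dist P3 P1 + dist P1 P2 > 0" using tri2 by (simp add: dist_commute)
  have D3: "dist P2 P3 + dist P3 P1 - dist P1 P2 > 0" using tri3 by simp
  note e = exc_side[of P2 P3 P1, OF D2 D3]
  have "4 * (dist P2 P3)^2 * dist P3 P1 * dist P1 P2 / ((dist P2 P3 - dist P3 P1 + dist P1 P2) * (dist P2 P3 + dist P3 P1 - dist P1 P2)) > 0"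
    using D2 D3 distinct by simp
  moreover have "(dist (excenter P2 P3 P1) (excenter P3 P1 P2))^2 = 0" using h by simp
  ultimately show False using e by linarith
qed

lemma orth1: "foot (excenter P1 P2 P3) (excenter P2 P3 P1) (excenter P3 P1 P2) = P1"
proof (rule foot_eq[OF n1_ne _ _ v1(4) I23_ne])
  have e11: "edot a b P1 P1 = 1" using on1 unfolding edot_def on_ellipse_def by (simp add: power2_eq_square)
  show "ellipse_normal a b P1 \<bullet> (excenter P2 P3 P1 - P1) = 0"
    unfolding inner_diff_right normal_inner using v1(2) e11 by simp
  show "ellipse_normal a b P1 \<bullet> (excenter P3 P1 P2 - P1) = 0"
    unfolding inner_diff_right normal_inner using v1(1) e11 by simp
qed

lemma symmedian0: "symmedian (excenter P1 P2 P3) (excenter P2 P3 P1) (excenter P3 P1 P2) = 0"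
proof -
  define l1 where "l1 = dist P2 P3"
  define l2 where "l2 = dist P3 P1"
  define l3 where "l3 = dist P1 P2"
  define D1 where "D1 = - l1 + l2 + l3"
  define D2 where "D2 = l1 - l2 + l3"
  define D3 where "D3 = l1 + l2 - l3"
  define I1 where "I1 = excenter P1 P2 P3"
  define I2 where "I2 = excenter P2 P3 P1"
  define I3 where "I3 = excenter P3 P1 P2"
  define T1 where "T1 = (- l1) *\<^sub>R P1 + l2 *\<^sub>R P2 + l3 *\<^sub>R P3"
  define T2 where "T2 = l1 *\<^sub>R P1 + (- l2) *\<^sub>R P2 + l3 *\<^sub>R P3"
  define T3 where "T3 = l1 *\<^sub>R P1 + l2 *\<^sub>R P2 + (- l3) *\<^sub>R P3"
  have Dp: "D1 > 0" "D2 > 0" "D3 > 0" using tri1 tri2 tri3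
    unfolding D1_def D2_def D3_def l1_def l2_def l3_def by (simp_all add: dist_commute)
  have lp: "l1 > 0" "l2 > 0" "l3 > 0" using distinct unfolding l1_def l2_def l3_def by auto
  have I1e: "I1 = (1 / D1) *\<^sub>R T1" unfolding I1_def excenter_def Let_def T1_def D1_def l1_def l2_def l3_def ..
  have I2e: "I2 = (1 / D2) *\<^sub>R T2" unfolding I2_def excenter_def Let_def T2_def D2_def l1_def l2_def l3_def
    by (simp add: dist_commute algebra_simps)
  have I3e: "I3 = (1 / D3) *\<^sub>R T3" unfolding I3_def excenter_def Let_def T3_def D3_def l1_def l2_def l3_def
    by (simp add: dist_commute algebra_simps)
  have s1: "(dist I2 I3)^2 = 4 * l1^2 * l2 * l3 / (D2 * D3)"
    using exc_side[of P2 P3 P1] Dp unfolding I2_def I3_def D2_def D3_def l1_def l2_def l3_def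
    by (simp add: dist_commute)
  have s2: "(dist I3 I1)^2 = 4 * l2^2 * l3 * l1 / (D3 * D1)"
    using exc_side[of P3 P1 P2] Dp unfolding I3_def I1_def D1_def D3_def l1_def l2_def l3_def
    by (simp add: dist_commute algebra_simps)
  have s3: "(dist I1 I2)^2 = 4 * l3^2 * l1 * l2 / (D1 * D2)"
    using exc_side[of P1 P2 P3] Dp unfolding I1_def I2_def D1_def D2_def l1_def l2_def l3_def
    by (simp add: dist_commute algebra_simps)
  define F where "F = 4 * l1 * l2 * l3 / (D1 * D2 * D3)"
  have f1: "(dist I2 I3)^2 *\<^sub>R I1 = F *\<^sub>R (l1 *\<^sub>R T1)"
    unfolding s1 I1e F_def using Dp by (simp add: field_simps power2_eq_square)
  have f2: "(dist I3 I1)^2 *\<^sub>R I2 = F *\<^sub>R (l2 *\<^sub>R T2)"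
    unfolding s2 I2e F_def using Dp by (simp add: field_simps power2_eq_square)
  have f3: "(dist I1 I2)^2 *\<^sub>R I3 = F *\<^sub>R (l3 *\<^sub>R T3)"
    unfolding s3 I3e F_def using Dp by (simp add: field_simps power2_eq_square)
  have m1: "cross2 (P2 + P3) I1 = 0"
    using pole_mid[OF _ _ on2 on3 distinct(3)] v2(1) v3(2) a0 b0 unfolding I1_def by simp
  have m2: "cross2 (P3 + P1) I2 = 0"
    using pole_mid[OF _ _ on3 on1 distinct(2)[symmetric]] v3(1) v1(2) a0 b0 unfolding I2_def by simp
  have m3: "cross2 (P1 + P2) I3 = 0"
    using pole_mid[OF _ _ on1 on2 distinct(1)] v1(1) v2(2) a0 b0 unfolding I3_def by simp
  have c1: "cross2 (P2 + P3) T1 = 0" using m1 Dp(1) unfolding I1e cross2_lin by simp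
  have c2: "cross2 (P3 + P1) T2 = 0" using m2 Dp(2) unfolding I2e cross2_lin by simp
  have c3: "cross2 (P1 + P2) T3 = 0" using m3 Dp(3) unfolding I3e cross2_lin by simp
  define \<alpha> where "\<alpha> = cross2 P2 P3"
  define \<beta> where "\<beta> = cross2 P3 P1"
  define \<gamma> where "\<gamma> = cross2 P1 P2"
  have E1: "l1 * (\<gamma> - \<beta>) + (l3 - l2) * \<alpha> = 0"
    using c1 unfolding T1_def \<alpha>_def \<beta>_def \<gamma>_def cross2_def by (simp add: algebra_simps)
  have E2: "l2 * (\<alpha> - \<gamma>) + (l1 - l3) * \<beta> = 0"
    using c2 unfolding T2_def \<alpha>_def \<beta>_def \<gamma>_def cross2_def by (simp add: algebra_simps)
  have E3: "l3 * (\<beta> - \<alpha>) + (l2 - l1) * \<gamma> = 0"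
    using c3 unfolding T3_def \<alpha>_def \<beta>_def \<gamma>_def cross2_def by (simp add: algebra_simps)
  have S: "\<alpha> + \<beta> + \<gamma> \<noteq> 0"
  proof -
    have "\<alpha> + \<beta> + \<gamma> = cross2 (P2 - P1) (P3 - P1)" unfolding \<alpha>_def \<beta>_def \<gamma>_def cross2_def
      by (simp add: algebra_simps)
    thus ?thesis using S0 by simp
  qed
  have id: "\<alpha> *\<^sub>R P1 + \<beta> *\<^sub>R P2 + \<gamma> *\<^sub>R P3 = 0" unfolding \<alpha>_def \<beta>_def \<gamma>_def by (rule cross_sum_id)
  have pos: "l1 * D1 > 0" "l2 * D2 > 0" "l3 * D3 > 0" using lp Dp by simp_all
  have W: "(l1 * D1) *\<^sub>R P1 + (l2 * D2) *\<^sub>R P2 + (l3 * D3) *\<^sub>R P3 = 0"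
    by (rule weights_zero[OF E1 E2 E3 D1_def D2_def D3_def pos S id])
  have "l1 *\<^sub>R T1 + l2 *\<^sub>R T2 + l3 *\<^sub>R T3 = (l1 * D1) *\<^sub>R P1 + (l2 * D2) *\<^sub>R P2 + (l3 * D3) *\<^sub>R P3"
    unfolding T1_def T2_def T3_def D1_def D2_def D3_def by (simp add: algebra_simps)
  hence sum0: "l1 *\<^sub>R T1 + l2 *\<^sub>R T2 + l3 *\<^sub>R T3 = 0" using W by simp
  have "(dist I2 I3)^2 *\<^sub>R I1 + (dist I3 I1)^2 *\<^sub>R I2 + (dist I1 I2)^2 *\<^sub>R I3
      = F *\<^sub>R (l1 *\<^sub>R T1 + l2 *\<^sub>R T2 + l3 *\<^sub>R T3)"
    unfolding f1 f2 f3 by (simp only: scaleR_add_right)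
  also have "\<dots> = 0" using sum0 by simp
  finally have "(dist I2 I3)^2 *\<^sub>R I1 + (dist I3 I1)^2 *\<^sub>R I2 + (dist I1 I2)^2 *\<^sub>R I3 = 0" .
  thus ?thesis unfolding symmedian_def Let_def I1_def[symmetric] I2_def[symmetric] I3_def[symmetric]
    by simp
qed

end



context orbit
begin

lemma ex_c: "orbit_c a b P1 P2 P3 (fst P1 / a) (snd P1 / b) (fst P2 / a) (snd P2 / b) (fst P3 / a) (snd P3 / b)"
  unfolding orbit_c_def orbit_c_axioms_def orbit_def using b0 ab bil a0 by simp

lemma L1_all:
  assumes X: "X \<in> closed_segment (excenter P2 P3 P1) (excenter P3 P1 P2)"
    and d: "d \<in> {P3 - P2, P1 - P3, P2 - P1}" and t: "X = t *\<^sub>R d"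
  shows "norm X = r0 a b"
proof -
  note oc = ex_c
  have X': "X \<in> closed_segment (orbit_c.I2 P1 P2 P3) (orbit_c.I3 P1 P2 P3)"
    using X unfolding orbit_c.I2_def[OF oc] orbit_c.I3_def[OF oc] .
  consider "d = P3 - P2" | "d = P1 - P3" | "d = P2 - P1" using d by auto
  thus ?thesis
  proof cases
    case 1
    have tt: "X = t *\<^sub>R (P3 - P2)" using t 1 by simp
    from orbit_c.L1_bad[OF oc X' tt] show ?thesis ..
  next
    case 2
    have tt: "X = t *\<^sub>R (P2 - P1) \<or> X = t *\<^sub>R (P1 - P3)" using t 2 by simp
    show ?thesis by (rule orbit_c.L1_good[OF oc X' tt])
  next
    case 3
    have tt: "X = t *\<^sub>R (P2 - P1) \<or> X = t *\<^sub>R (P1 - P3)" using t 3 by simp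
    show ?thesis by (rule orbit_c.L1_good[OF oc X' tt])
  qed
qed

lemma L1_ne: "\<exists>X \<in> closed_segment (excenter P2 P3 P1) (excenter P3 P1 P2). \<exists>t. X = t *\<^sub>R (P2 - P1)"
proof -
  note oc = ex_c
  have "(- 1 / orbit_c.c12 (fst P1 / a) (snd P1 / b) (fst P2 / a) (snd P2 / b)) *\<^sub>R (P2 - P1)
     \<in> closed_segment (orbit_c.I2 P1 P2 P3) (orbit_c.I3 P1 P2 P3)"
    by (rule orbit_c.L1_nonempty[OF oc])
  thus ?thesis unfolding orbit_c.I2_def[OF oc] orbit_c.I3_def[OF oc] by blast
qed

lemma main:
  "case excentral P1 P2 P3 of (A, B, C) \<Rightarrow>
     symmedian A B C = (0, 0) \<and>
     cosine_circle_points A B C \<noteq> {} \<and>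
     (\<forall>X \<in> cosine_circle_points A B C. norm X = r0 a b)"
proof -
  define I1 where "I1 = excenter P1 P2 P3"
  define I2 where "I2 = excenter P2 P3 P1"
  define I3 where "I3 = excenter P3 P1 P2"
  have ex: "excentral P1 P2 P3 = (I1, I2, I3)" unfolding excentral_def I1_def I2_def I3_def ..
  have sym: "symmedian I1 I2 I3 = 0" unfolding I1_def I2_def I3_def by (rule symmedian0)
  have o1: "foot I1 I2 I3 = P1" unfolding I1_def I2_def I3_def by (rule orth1)
  have o2: "foot I2 I3 I1 = P2" unfolding I1_def I2_def I3_def by (rule orbit.orth1[OF rot])
  have o3: "foot I3 I1 I2 = P3" unfolding I1_def I2_def I3_def by (rule orbit.orth1[OF rot2])
  have orth: "orthic I1 I2 I3 = (P1, P2, P3)" unfolding orthic_def o1 o2 o3 ..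
  have ccp: "cosine_circle_points I1 I2 I3 =
     {X \<in> closed_segment I1 I2 \<union> closed_segment I2 I3 \<union> closed_segment I3 I1.
        \<exists>d\<in>{P3 - P2, P1 - P3, P2 - P1}. \<exists>t::real. X = t *\<^sub>R d}"
    unfolding cosine_circle_points_def Let_def orth sym by simp
  have dirs_rot1: "{P1 - P3, P2 - P1, P3 - P2} = {P3 - P2, P1 - P3, P2 - P1}" by auto
  have dirs_rot2: "{P2 - P1, P3 - P2, P1 - P3} = {P3 - P2, P1 - P3, P2 - P1}" by auto
  have all: "\<forall>X \<in> cosine_circle_points I1 I2 I3. norm X = r0 a b"
  proof
    fix X assume "X \<in> cosine_circle_points I1 I2 I3"
    then obtain d t where X: "X \<in> closed_segment I1 I2 \<union> closed_segment I2 I3 \<union> closed_segment I3 I1"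
      and d: "d \<in> {P3 - P2, P1 - P3, P2 - P1}" and t: "X = t *\<^sub>R d"
      unfolding ccp by blast
    from X consider "X \<in> closed_segment I2 I3" | "X \<in> closed_segment I3 I1" | "X \<in> closed_segment I1 I2"
      by blast
    thus "norm X = r0 a b"
    proof cases
      case 1
      thus ?thesis using L1_all d t unfolding I2_def I3_def by blast
    next
      case 2
      have d': "d \<in> {P1 - P3, P2 - P1, P3 - P2}" using d dirs_rot1 by simp
      show ?thesis using orbit.L1_all[OF rot, of X d t] 2 d' t unfolding I3_def I1_def by blast
    next
      case 3
      have d': "d \<in> {P2 - P1, P3 - P2, P1 - P3}" using d dirs_rot2 by simp
      show ?thesis using orbit.L1_all[OF rot2, of X d t] 3 d' t unfolding I1_def I2_def by blast
    qed
  qed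
  have ne: "cosine_circle_points I1 I2 I3 \<noteq> {}"
  proof -
    obtain X t where "X \<in> closed_segment I2 I3" "X = t *\<^sub>R (P2 - P1)"
      using L1_ne unfolding I2_def I3_def by blast
    hence "X \<in> cosine_circle_points I1 I2 I3" unfolding ccp by blast
    thus ?thesis by blast
  qed
  show ?thesis unfolding ex using sym ne all by (simp add: zero_prod_def)
qed

end


theorem theorem4:
  fixes a b :: real
  assumes "a > b" and "b > 0"
  shows "\<exists>r::real. r > a \<and>
           (\<forall>P1 P2 P3. billiard3 a b P1 P2 P3 \<longrightarrow>
              (case excentral P1 P2 P3 of (A, B, C) \<Rightarrow>
                 symmedian A B C = (0, 0) \<and>
                 cosine_circle_points A B C \<noteq> {} \<and>
                 (\<forall>X \<in> cosine_circle_points A B C. norm X = r)))"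
proof (intro exI conjI allI impI)
  show "r0 a b > a" using r0_gt assms by simp
  fix P1 P2 P3 assume "billiard3 a b P1 P2 P3"
  then interpret orbit a b P1 P2 P3 using assms by unfold_locales auto
  show "case excentral P1 P2 P3 of (A, B, C) \<Rightarrow>
                 symmedian A B C = (0, 0) \<and>
                 cosine_circle_points A B C \<noteq> {} \<and>
                 (\<forall>X \<in> cosine_circle_points A B C. norm X = r0 a b)"
    by (rule main)
qed


end
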